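(* Let $M$ be a duplicial module in a pre-additive category. For all $n\ge0$, $$\pi_n=(1-b_{n+1}d_n)^{n+1}(1-d_{n-1}b_n)^n .$$
   Context: Let $\mathcal A$ be a pre-additive category. Let $\Lambda_+$ be the category with objects $[n]$, $n\ge0$, where $\Lambda_+([m],[n])$ is the set of weakly monotone $f:\mathbb Z\to\mathbb Z$ with $f(j+m+1)=f(j)+n+1$ for all $j$ and $f(0)\ge0$. Define $\varepsilon^n_i:[n-1]\to[n]$ ($n\ge1$, $0\le i\le n$) by $\varepsilon^n_i(j)=j$ for $0\le j<i$, $j+1$ for $i\le j\le n-1$, and $\eta^n_i:[n+1]\to[n]$ ($0\le i\le n+1$) by $\eta^n_i(j)=j$ for $0\le j\le i$, $j-1$ for $i<j\le n+1$. A duplicial module is a functor $M:\Lambda_+^{op}\to\mathcal A$; $M_n=M([n])$, $\partial_{n,i}=M(\varepsilon^n_i):M_n\to M_{n-1}$, $s_{n,i}=M(\eta^n_i):M_n\to M_{n+1}$. Convention $M_{-1}=0$, maps into/out of it zero. Define $b_n=\sum_{i=0}^n(-1)^i\partial_{n,i}$ ($b_0=0$), $d_n=\sum_{i=0}^{n+1}(-1)^is_{n,i}$ ($d_{-1}=0$), the Karoubi operator $\kappa_n=(-1)^n(\partial_{n+1,0}s_{n,n+1}-s_{n-1,n}\partial_{n,0})$ (so $\kappa_0=\partial_{1,0}s_{0,1}$), and the Dwyer–Kan operator $\pi_n=(-1)^n\partial_{n+1,0}\kappa_{n+1}^n s_{n,n+1}$. *)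

theory Defs
  imports Main
begin

record ('o, 'm) preadd_cat =
  Ob   :: "'o set"
  Mor  :: "'m set"
  Dom  :: "'m \<Rightarrow> 'o"
  Cod  :: "'m \<Rightarrow> 'o"
  Id   :: "'o \<Rightarrow> 'm"
  Comp :: "'m \<Rightarrow> 'm \<Rightarrow> 'm"   (* Comp g f = g \<circ> f  (first f, then g) *)
  Add  :: "'m \<Rightarrow> 'm \<Rightarrow> 'm"
  Zero :: "'o \<Rightarrow> 'o \<Rightarrow> 'm"
  Neg  :: "'m \<Rightarrow> 'm"

definition hom :: "('o, 'm) preadd_cat \<Rightarrow> 'o \<Rightarrow> 'o \<Rightarrow> 'm set" where
  "hom C a b = {f \<in> Mor C. Dom C f = a \<and> Cod C f = b}"

definition preadditive :: "('o, 'm) preadd_cat \<Rightarrow> bool" where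
  "preadditive C \<longleftrightarrow>
     (\<forall>f\<in>Mor C. Dom C f \<in> Ob C \<and> Cod C f \<in> Ob C) \<and>
     (\<forall>a\<in>Ob C. Id C a \<in> hom C a a) \<and>
     (\<forall>a\<in>Ob C. \<forall>b\<in>Ob C. \<forall>c\<in>Ob C. \<forall>f\<in>hom C a b. \<forall>g\<in>hom C b c.
        Comp C g f \<in> hom C a c) \<and>
     (\<forall>f\<in>Mor C. Comp C f (Id C (Dom C f)) = f \<and> Comp C (Id C (Cod C f)) f = f) \<and>
     (\<forall>a\<in>Ob C. \<forall>b\<in>Ob C. \<forall>c\<in>Ob C. \<forall>d\<in>Ob C.
        \<forall>f\<in>hom C a b. \<forall>g\<in>hom C b c. \<forall>h\<in>hom C c d.
        Comp C h (Comp C g f) = Comp C (Comp C h g) f) \<and>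
     (\<forall>a\<in>Ob C. \<forall>b\<in>Ob C.
        Zero C a b \<in> hom C a b \<and>
        (\<forall>f\<in>hom C a b. \<forall>g\<in>hom C a b.
           Add C f g \<in> hom C a b \<and> Add C f g = Add C g f) \<and>
        (\<forall>f\<in>hom C a b. \<forall>g\<in>hom C a b. \<forall>h\<in>hom C a b.
           Add C (Add C f g) h = Add C f (Add C g h)) \<and>
        (\<forall>f\<in>hom C a b. Add C f (Zero C a b) = f \<and>
           Neg C f \<in> hom C a b \<and> Add C f (Neg C f) = Zero C a b)) \<and>
     (\<forall>a\<in>Ob C. \<forall>b\<in>Ob C. \<forall>c\<in>Ob C.
        (\<forall>f\<in>hom C a b. \<forall>f'\<in>hom C a b. \<forall>g\<in>hom C b c.
           Comp C g (Add C f f') = Add C (Comp C g f) (Comp C g f')) \<and>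
        (\<forall>f\<in>hom C a b. \<forall>g\<in>hom C b c. \<forall>g'\<in>hom C b c.
           Comp C (Add C g g') f = Add C (Comp C g f) (Comp C g' f)))"

definition lam_mor :: "nat \<Rightarrow> nat \<Rightarrow> (int \<Rightarrow> int) \<Rightarrow> bool" where
  "lam_mor m n f \<longleftrightarrow> mono f \<and> (\<forall>j. f (j + int m + 1) = f j + int n + 1) \<and> f 0 \<ge> 0"

text \<open>epsilon^n_i : [n-1] -> [n] (n >= 1), extended periodically.\<close>
definition eps :: "nat \<Rightarrow> nat \<Rightarrow> int \<Rightarrow> int" where
  "eps n i j = (let q = j div int n; r = j mod int n in
                 q * (int n + 1) + (if r < int i then r else r + 1))"

text \<open>eta^n_i : [n+1] -> [n], extended periodically.\<close>
definition eta :: "nat \<Rightarrow> nat \<Rightarrow> int \<Rightarrow> int" where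
  "eta n i j = (let q = j div (int n + 2); r = j mod (int n + 2) in
                 q * (int n + 1) + (if r \<le> int i then r else r - 1))"

text \<open>A duplicial module is a functor M : Lambda_+^op -> C, given by objects
  MO n = M_n and, for f : [m] -> [n] in Lambda_+, a morphism MM m n f : M_n -> M_m.\<close>

definition duplicial :: "('o, 'm) preadd_cat \<Rightarrow> (nat \<Rightarrow> 'o)
      \<Rightarrow> (nat \<Rightarrow> nat \<Rightarrow> (int \<Rightarrow> int) \<Rightarrow> 'm) \<Rightarrow> bool" where
  "duplicial C MO MM \<longleftrightarrow>
     (\<forall>n. MO n \<in> Ob C) \<and>
     (\<forall>m n f. lam_mor m n f \<longrightarrow> MM m n f \<in> hom C (MO n) (MO m)) \<and>
     (\<forall>m. MM m m id = Id C (MO m)) \<and>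
     (\<forall>l m n f g. lam_mor l m f \<longrightarrow> lam_mor m n g \<longrightarrow>
        MM l n (g \<circ> f) = Comp C (MM l m f) (MM m n g))"

definition sgn_mor :: "('o, 'm) preadd_cat \<Rightarrow> nat \<Rightarrow> 'm \<Rightarrow> 'm" where
  "sgn_mor C k x = (if even k then x else Neg C x)"

definition alt_sum :: "('o, 'm) preadd_cat \<Rightarrow> 'o \<Rightarrow> 'o \<Rightarrow> (nat \<Rightarrow> 'm) \<Rightarrow> nat \<Rightarrow> 'm" where
  "alt_sum C a b F k = foldr (\<lambda>i acc. Add C (sgn_mor C i (F i)) acc) [0..<k] (Zero C a b)"

definition mpow :: "('o, 'm) preadd_cat \<Rightarrow> 'o \<Rightarrow> 'm \<Rightarrow> nat \<Rightarrow> 'm" where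
  "mpow C a f k = (Comp C f ^^ k) (Id C a)"

definition one_minus :: "('o, 'm) preadd_cat \<Rightarrow> 'o \<Rightarrow> 'm \<Rightarrow> 'm" where
  "one_minus C a f = Add C (Id C a) (Neg C f)"

definition face :: "(nat \<Rightarrow> nat \<Rightarrow> (int \<Rightarrow> int) \<Rightarrow> 'm) \<Rightarrow> nat \<Rightarrow> nat \<Rightarrow> 'm" where
  "face MM n i = MM (n - 1) n (eps n i)"

definition degen :: "(nat \<Rightarrow> nat \<Rightarrow> (int \<Rightarrow> int) \<Rightarrow> 'm) \<Rightarrow> nat \<Rightarrow> nat \<Rightarrow> 'm" where
  "degen MM n i = MM (n + 1) n (eta n i)"

text \<open>b_n = sum_{i=0}^n (-1)^i partial_{n,i} : M_n -> M_{n-1}; only used for n >= 1.\<close>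
definition bop :: "('o, 'm) preadd_cat \<Rightarrow> (nat \<Rightarrow> 'o)
      \<Rightarrow> (nat \<Rightarrow> nat \<Rightarrow> (int \<Rightarrow> int) \<Rightarrow> 'm) \<Rightarrow> nat \<Rightarrow> 'm" where
  "bop C MO MM n = alt_sum C (MO n) (MO (n - 1)) (face MM n) (n + 1)"

definition dop :: "('o, 'm) preadd_cat \<Rightarrow> (nat \<Rightarrow> 'o)
      \<Rightarrow> (nat \<Rightarrow> nat \<Rightarrow> (int \<Rightarrow> int) \<Rightarrow> 'm) \<Rightarrow> nat \<Rightarrow> 'm" where
  "dop C MO MM n = alt_sum C (MO n) (MO (n + 1)) (degen MM n) (n + 2)"

text \<open>Karoubi operator kappa_n = (-1)^n (partial_{n+1,0} s_{n,n+1} - s_{n-1,n} partial_{n,0}),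
  for n >= 1 (the only case used below).\<close>
definition karoubi :: "('o, 'm) preadd_cat \<Rightarrow> (nat \<Rightarrow> nat \<Rightarrow> (int \<Rightarrow> int) \<Rightarrow> 'm) \<Rightarrow> nat \<Rightarrow> 'm" where
  "karoubi C MM n = sgn_mor C n
     (Add C (Comp C (face MM (n + 1) 0) (degen MM n (n + 1)))
            (Neg C (Comp C (degen MM (n - 1) n) (face MM n 0))))"

definition dwyer_kan :: "('o, 'm) preadd_cat \<Rightarrow> (nat \<Rightarrow> 'o)
      \<Rightarrow> (nat \<Rightarrow> nat \<Rightarrow> (int \<Rightarrow> int) \<Rightarrow> 'm) \<Rightarrow> nat \<Rightarrow> 'm" where
  "dwyer_kan C MO MM n = sgn_mor C n
     (Comp C (face MM (n + 1) 0)
        (Comp C (mpow C (MO (n + 1)) (karoubi C MM (n + 1)) n) (degen MM n (n + 1))))"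

end

theory Submission
  imports Defs "HOL-Library.Poly_Mapping" "HOL-Algebra.FiniteProduct"
begin

section \<open>The monoid of Lambda-maps and its integral monoid ring\<close>

datatype lm = LM (unLM: "int \<Rightarrow> int")

instantiation lm :: monoid_add
begin
definition zero_lm :: lm where "zero_lm = LM id"
definition plus_lm :: "lm \<Rightarrow> lm \<Rightarrow> lm" where "plus_lm a b = LM (unLM a \<circ> unLM b)"
instance
proof
  fix a b c :: lm
  show "a + b + c = a + (b + c)" by (simp add: plus_lm_def o_assoc)
  show "0 + a = a" by (cases a) (simp add: plus_lm_def zero_lm_def)
  show "a + 0 = a" by (cases a) (simp add: plus_lm_def zero_lm_def)
qed
end

type_synonym rr = "lm \<Rightarrow>\<^sub>0 int"

definition fr :: "(int \<Rightarrow> int) \<Rightarrow> rr" where "fr f = frag_of (LM f)"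

lemma fr_mult: "fr f * fr g = fr (f \<circ> g)"
  by (simp add: fr_def mult_single plus_lm_def)

lemma fr_mult3: "fr f * fr g * fr h = fr (f \<circ> g \<circ> h)"
  by (simp add: fr_mult)

lemma fr_id: "fr id = 1"
  by (simp add: fr_def zero_lm_def[symmetric])

section \<open>Quasi-periodic maps\<close>

definition qp :: "int \<Rightarrow> int \<Rightarrow> (int \<Rightarrow> int) \<Rightarrow> bool" where
  "qp p q f \<longleftrightarrow> (\<forall>j. f (j + p) = f j + q)"

lemma qp_mult:
  assumes "qp p q f"
  shows "f (j + k * p) = f j + k * q"
proof (induct k rule: int_induct[where k = 0])
  case base then show ?case by simp
next
  case (step1 i)
  have "f (j + (i + 1) * p) = f ((j + i * p) + p)" by (simp add: algebra_simps)
  also have "\<dots> = f (j + i * p) + q" using assms by (simp add: qp_def)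
  finally show ?case using step1 by (simp add: algebra_simps)
next
  case (step2 i)
  have "f (j + i * p) = f ((j + (i - 1) * p) + p)" by (simp add: algebra_simps)
  also have "\<dots> = f (j + (i - 1) * p) + q" using assms by (simp add: qp_def)
  finally show ?case using step2 by (simp add: algebra_simps)
qed

lemma qp_eqI:
  assumes "p > 0" "qp p q f" "qp p q g" "\<And>j. 0 \<le> j \<Longrightarrow> j < p \<Longrightarrow> f j = g j"
  shows "f = g"
proof
  fix x
  have x: "x = x mod p + (x div p) * p" by simp
  have "f x = f (x mod p) + (x div p) * q" using qp_mult[OF assms(2)] x by metis
  also have "\<dots> = g (x mod p) + (x div p) * q" using assms(1,4) by simp
  also have "\<dots> = g x" using qp_mult[OF assms(3), of "x mod p" "x div p"] x by metis
  finally show "f x = g x" .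
qed

lemma qp_comp: "qp p q g \<Longrightarrow> qp q r f \<Longrightarrow> qp p r (f \<circ> g)"
  by (simp add: qp_def)

lemma eps_qp: "1 \<le> n \<Longrightarrow> qp (int n) (int n + 1) (eps n i)"
proof -
  assume "1 \<le> n"
  then have np: "int n > 0" by simp
  show ?thesis unfolding qp_def eps_def Let_def
  proof
    fix j
    have "(j + int n) div int n = j div int n + 1" using np by (metis div_add_self2 less_irrefl)
    moreover have "(j + int n) mod int n = j mod int n" by simp
    ultimately show "(j + int n) div int n * (int n + 1) + (if (j + int n) mod int n < int i then (j + int n) mod int n else (j + int n) mod int n + 1) =
         j div int n * (int n + 1) + (if j mod int n < int i then j mod int n else j mod int n + 1) + (int n + 1)"
      by (simp add: algebra_simps)
  qed
qed

lemma eta_qp: "qp (int n + 2) (int n + 1) (eta n i)"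
proof -
  have np: "int n + 2 > 0" by simp
  show ?thesis unfolding qp_def eta_def Let_def
  proof
    fix j
    have "(j + (int n + 2)) div (int n + 2) = j div (int n + 2) + 1" using np by (metis div_add_self2 less_irrefl)
    moreover have "(j + (int n + 2)) mod (int n + 2) = j mod (int n + 2)" by simp
    ultimately show "(j + (int n + 2)) div (int n + 2) * (int n + 1) + (if (j + (int n + 2)) mod (int n + 2) \<le> int i then (j + (int n + 2)) mod (int n + 2) else (j + (int n + 2)) mod (int n + 2) - 1) =
         j div (int n + 2) * (int n + 1) + (if j mod (int n + 2) \<le> int i then j mod (int n + 2) else j mod (int n + 2) - 1) + (int n + 1)"
      by (simp add: algebra_simps)
  qed
qed

lemma eps_lo: "0 \<le> j \<Longrightarrow> j < int n \<Longrightarrow> eps n i j = (if j < int i then j else j + 1)"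
  by (simp add: eps_def Let_def div_pos_pos_trivial mod_pos_pos_trivial)

lemma eps_hi:
  assumes "int n \<le> j" "j < 2 * int n"
  shows "eps n i j = (if j - int n < int i then j + 1 else j + 2)"
proof -
  have n1: "1 \<le> n" using assms by simp
  have "eps n i j = eps n i ((j - int n) + int n)" by simp
  also have "\<dots> = eps n i (j - int n) + int n + 1"
    using eps_qp[OF n1, of i] unfolding qp_def by (metis add.assoc)
  also have "\<dots> = (if j - int n < int i then j + 1 else j + 2)"
    using assms by (simp add: eps_lo)
  finally show ?thesis .
qed

lemma eta_lo: "0 \<le> j \<Longrightarrow> j < int n + 2 \<Longrightarrow> eta n i j = (if j \<le> int i then j else j - 1)"
  by (simp add: eta_def Let_def div_pos_pos_trivial mod_pos_pos_trivial)

lemma eta_hi: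
  assumes "int n + 2 \<le> j" "j < 2 * (int n + 2)"
  shows "eta n i j = (if j - (int n + 2) \<le> int i then j - 1 else j - 2)"
proof -
  have "eta n i j = eta n i ((j - (int n + 2)) + (int n + 2))" by simp
  also have "\<dots> = eta n i (j - (int n + 2)) + int n + 1"
    using eta_qp[of n i] unfolding qp_def by (metis add.assoc)
  also have "\<dots> = (if j - (int n + 2) \<le> int i then j - 1 else j - 2)"
    using assms by (simp add: eta_lo)
  finally show ?thesis .
qed

section \<open>Lambda-morphisms\<close>

lemma mono_int_step:
  fixes f :: "int \<Rightarrow> int"
  assumes "\<And>j. f j \<le> f (j + 1)"
  shows "mono f"
proof (rule monoI)
  fix x y :: int assume "x \<le> y"
  then obtain d :: nat where y: "y = x + int d" by (metis zle_iff_zadd)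
  have "f x \<le> f (x + int d)"
  proof (induct d)
    case 0 then show ?case by simp
  next
    case (Suc d)
    have "f (x + int d) \<le> f (x + int d + 1)" by (rule assms)
    moreover have e: "x + int (Suc d) = x + int d + 1" by simp
    ultimately show ?case using Suc by (metis order_trans)
  qed
  then show "f x \<le> f y" using y by simp
qed

lemma lam_morI:
  assumes q: "qp (int m + 1) (int n + 1) f"
    and st: "\<And>j. 0 \<le> j \<Longrightarrow> j < int m + 1 \<Longrightarrow> f j \<le> f (j + 1)"
    and z: "f 0 \<ge> 0"
  shows "lam_mor m n f"
proof -
  have "f j \<le> f (j + 1)" for j
  proof -
    let ?p = "int m + 1"
    have p: "?p > 0" by simp
    have j: "j = j mod ?p + (j div ?p) * ?p" by (metis mod_div_mult_eq)
    have j1: "j + 1 = (j mod ?p + 1) + (j div ?p) * ?p" using j by simp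
    have "f j = f (j mod ?p) + (j div ?p) * (int n + 1)" using qp_mult[OF q] j by metis
    moreover have "f (j + 1) = f (j mod ?p + 1) + (j div ?p) * (int n + 1)"
      using qp_mult[OF q, of "j mod ?p + 1" "j div ?p"] j1 by metis
    moreover have "f (j mod ?p) \<le> f (j mod ?p + 1)"
    proof (rule st)
      show "0 \<le> j mod ?p" using p by simp
      show "j mod ?p < ?p" using p by (rule pos_mod_bound)
    qed
    ultimately show ?thesis by simp
  qed
  then have "mono f" by (rule mono_int_step)
  moreover have "\<forall>j. f (j + int m + 1) = f j + int n + 1"
    using q by (simp add: qp_def add.assoc)
  ultimately show ?thesis using z by (simp add: lam_mor_def)
qed

lemma lam_mor_qp: "lam_mor m n f \<Longrightarrow> qp (int m + 1) (int n + 1) f"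
  by (simp add: lam_mor_def qp_def add.assoc)

lemma lam_mor_comp: "lam_mor l m f \<Longrightarrow> lam_mor m n g \<Longrightarrow> lam_mor l n (g \<circ> f)"
  unfolding lam_mor_def
proof (intro conjI)
  assume f: "mono f \<and> (\<forall>j. f (j + int l + 1) = f j + int m + 1) \<and> 0 \<le> f 0"
    and g: "mono g \<and> (\<forall>j. g (j + int m + 1) = g j + int n + 1) \<and> 0 \<le> g 0"
  show "mono (g \<circ> f)" using f g by (simp add: mono_def)
  show "\<forall>j. (g \<circ> f) (j + int l + 1) = (g \<circ> f) j + int n + 1"
    using f g by (simp add: add.assoc)
  have "g 0 \<le> g (f 0)" using f g by (simp add: mono_def)
  then show "0 \<le> (g \<circ> f) 0" using g by simp
qed

lemma lam_mor_id: "lam_mor m m id"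
  by (simp add: lam_mor_def mono_def)

lemma lam_eps:
  assumes "1 \<le> n" "i \<le> n"
  shows "lam_mor (n - 1) n (eps n i)"
proof (rule lam_morI)
  have e: "int (n - 1) + 1 = int n" using assms by simp
  show "qp (int (n - 1) + 1) (int n + 1) (eps n i)" using eps_qp[OF assms(1)] e by simp
  show "0 \<le> eps n i 0" using assms by (simp add: eps_lo)
  fix j assume j: "0 \<le> j" "j < int (n - 1) + 1"
  show "eps n i j \<le> eps n i (j + 1)"
  proof (cases "j + 1 < int n")
    case True then show ?thesis using j by (simp add: eps_lo)
  next
    case False
    then have "j + 1 = int n" using j e by simp
    then show ?thesis using j assms by (simp add: eps_lo eps_hi)
  qed
qed

lemma lam_eta:
  assumes "i \<le> n + 1"
  shows "lam_mor (n + 1) n (eta n i)"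
proof (rule lam_morI)
  have e: "int (n + 1) + 1 = int n + 2" by simp
  show "qp (int (n + 1) + 1) (int n + 1) (eta n i)" unfolding e by (rule eta_qp)
  show "0 \<le> eta n i 0" by (simp add: eta_lo)
  fix j assume j: "0 \<le> j" "j < int (n + 1) + 1"
  show "eta n i j \<le> eta n i (j + 1)"
  proof (cases "j + 1 < int n + 2")
    case True then show ?thesis using j by (simp add: eta_lo)
  next
    case False
    then have "j + 1 = int n + 2" using j by simp
    then show ?thesis using j assms by (simp add: eta_lo eta_hi)
  qed
qed

lemma eps_ev: "0 \<le> j \<Longrightarrow> j < 2 * int n \<Longrightarrow> eps n i j =
   (if j < int n then (if j < int i then j else j + 1) else (if j - int n < int i then j + 1 else j + 2))"
  by (simp add: eps_lo eps_hi)

lemma eta_ev: "0 \<le> j \<Longrightarrow> j < 2 * (int n + 2) \<Longrightarrow> eta n i j =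
   (if j < int n + 2 then (if j \<le> int i then j else j - 1) else (if j - (int n + 2) \<le> int i then j - 1 else j - 2))"
  by (simp add: eta_lo eta_hi)

lemma eps_qp': "1 \<le> n \<Longrightarrow> p = int n \<Longrightarrow> q = int n + 1 \<Longrightarrow> qp p q (eps n i)"
  using eps_qp by simp

lemma eta_qp': "p = int n + 2 \<Longrightarrow> q = int n + 1 \<Longrightarrow> qp p q (eta n i)"
  using eta_qp by simp

lemma qp_id: "qp p p id" by (simp add: qp_def)

lemmas qp_intros = qp_comp eps_qp' eta_qp' qp_id

section \<open>Identities in Lambda\<close>

lemma L1:
  assumes "1 \<le> n" "i \<le> j" "j \<le> n"
  shows "eps (n+1) i \<circ> eps n j = eps (n+1) (j+1) \<circ> eps n i"
proof (rule qp_eqI[where p = "int n" and q = "int n + 2"])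
  show "qp (int n) (int n + 2) (eps (n+1) i \<circ> eps n j)"
    by (rule qp_comp[OF eps_qp' eps_qp']) (use assms in simp_all)
  show "qp (int n) (int n + 2) (eps (n+1) (j+1) \<circ> eps n i)"
    by (rule qp_comp[OF eps_qp' eps_qp']) (use assms in simp_all)
  fix x assume x: "0 \<le> x" "x < int n"
  show "(eps (n+1) i \<circ> eps n j) x = (eps (n+1) (j+1) \<circ> eps n i) x"
    using x assms by (auto simp: eps_ev)
qed (use assms in simp)



lemma L2:
  assumes "b \<le> a" "a \<le> n + 1"
  shows "eta n a \<circ> eta (n+1) b = eta n b \<circ> eta (n+1) (a+1)"
proof (rule qp_eqI[where p = "int n + 3" and q = "int n + 1"])
  show "qp (int n + 3) (int n + 1) (eta n a \<circ> eta (n+1) b)" by (intro qp_comp eps_qp' eta_qp' qp_id; simp)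
  show "qp (int n + 3) (int n + 1) (eta n b \<circ> eta (n+1) (a+1))" by (intro qp_comp eps_qp' eta_qp' qp_id; simp)
  fix x assume x: "0 \<le> x" "x < int n + 3"
  show "(eta n a \<circ> eta (n+1) b) x = (eta n b \<circ> eta (n+1) (a+1)) x"
    using x assms by (auto simp: eta_ev)
qed simp

lemma L3a:
  assumes "1 \<le> n" "1 \<le> i" "i < j" "j \<le> n + 1"
  shows "eta n j \<circ> eps (n+1) i = eps n i \<circ> eta (n-1) (j-1)"
proof (rule qp_eqI[where p = "int n + 1" and q = "int n + 1"])
  show "qp (int n + 1) (int n + 1) (eta n j \<circ> eps (n+1) i)" by (intro qp_comp eps_qp' eta_qp' qp_id; simp)
  show "qp (int n + 1) (int n + 1) (eps n i \<circ> eta (n-1) (j-1))" using assms by (intro qp_comp eps_qp' eta_qp' qp_id; simp)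
  fix x assume x: "0 \<le> x" "x < int n + 1"
  show "(eta n j \<circ> eps (n+1) i) x = (eps n i \<circ> eta (n-1) (j-1)) x"
    using x assms by (auto simp: eps_ev eta_ev of_nat_diff)
qed simp

lemma L3b:
  assumes "i = j \<or> i = j + 1" "j \<le> n + 1"
  shows "eta n j \<circ> eps (n+1) i = id"
proof (rule qp_eqI[where p = "int n + 1" and q = "int n + 1"])
  show "qp (int n + 1) (int n + 1) (eta n j \<circ> eps (n+1) i)" by (intro qp_comp eps_qp' eta_qp' qp_id; simp)
  show "qp (int n + 1) (int n + 1) id" by (intro qp_comp eps_qp' eta_qp' qp_id; simp)
  fix x assume x: "0 \<le> x" "x < int n + 1"
  show "(eta n j \<circ> eps (n+1) i) x = id x"
    using x assms by (auto simp: eps_ev eta_ev)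
qed simp

lemma L3c:
  assumes "1 \<le> n" "j + 1 < i" "i \<le> n + 1"
  shows "eta n j \<circ> eps (n+1) i = eps n (i-1) \<circ> eta (n-1) j"
proof (rule qp_eqI[where p = "int n + 1" and q = "int n + 1"])
  show "qp (int n + 1) (int n + 1) (eta n j \<circ> eps (n+1) i)" by (intro qp_comp eps_qp' eta_qp' qp_id; simp)
  show "qp (int n + 1) (int n + 1) (eps n (i-1) \<circ> eta (n-1) j)" using assms by (intro qp_comp eps_qp' eta_qp' qp_id; simp)
  fix x assume x: "0 \<le> x" "x < int n + 1"
  show "(eta n j \<circ> eps (n+1) i) x = (eps n (i-1) \<circ> eta (n-1) j) x"
    using x assms by (auto simp: eps_ev eta_ev of_nat_diff)
qed simp

lemma L4:
  assumes "1 \<le> j" "j \<le> n"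
  shows "eta n j \<circ> eps (n+1) 0 = eps n 0 \<circ> eta (n-1) (j-1)"
proof (rule qp_eqI[where p = "int n + 1" and q = "int n + 1"])
  show "qp (int n + 1) (int n + 1) (eta n j \<circ> eps (n+1) 0)" by (intro qp_comp eps_qp' eta_qp' qp_id; simp)
  show "qp (int n + 1) (int n + 1) (eps n 0 \<circ> eta (n-1) (j-1))" using assms by (intro qp_comp eps_qp' eta_qp' qp_id; simp)
  fix x assume x: "0 \<le> x" "x < int n + 1"
  show "(eta n j \<circ> eps (n+1) 0) x = (eps n 0 \<circ> eta (n-1) (j-1)) x"
    using x assms by (auto simp: eps_ev eta_ev of_nat_diff)
qed simp

lemma L5a:
  assumes "1 \<le> m"
  shows "eta m (m+1) \<circ> eps (m+1) 0 \<circ> eps m m = eps m 0 \<circ> eta (m-1) m \<circ> eps m m"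
proof (rule qp_eqI[where p = "int m" and q = "int m + 1"])
  show "qp (int m) (int m + 1) (eta m (m+1) \<circ> eps (m+1) 0 \<circ> eps m m)" using assms by (intro qp_comp eps_qp' eta_qp' qp_id; simp)
  show "qp (int m) (int m + 1) (eps m 0 \<circ> eta (m-1) m \<circ> eps m m)" using assms by (intro qp_comp eps_qp' eta_qp' qp_id; simp)
  fix x assume x: "0 \<le> x" "x < int m"
  show "(eta m (m+1) \<circ> eps (m+1) 0 \<circ> eps m m) x = (eps m 0 \<circ> eta (m-1) m \<circ> eps m m) x"
    using x assms by (auto simp: eps_ev eta_ev of_nat_diff)
qed (use assms in simp)

lemma L5b:
  assumes "1 \<le> i" "i + 1 \<le> m"
  shows "eta m (m+1) \<circ> eps (m+1) 0 \<circ> eps m i = eps m (i+1) \<circ> eta (m-1) m \<circ> eps m 0"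
proof (rule qp_eqI[where p = "int m" and q = "int m + 1"])
  show "qp (int m) (int m + 1) (eta m (m+1) \<circ> eps (m+1) 0 \<circ> eps m i)" using assms by (intro qp_comp eps_qp' eta_qp' qp_id; simp)
  show "qp (int m) (int m + 1) (eps m (i+1) \<circ> eta (m-1) m \<circ> eps m 0)" using assms by (intro qp_comp eps_qp' eta_qp' qp_id; simp)
  fix x assume x: "0 \<le> x" "x < int m"
  show "(eta m (m+1) \<circ> eps (m+1) 0 \<circ> eps m i) x = (eps m (i+1) \<circ> eta (m-1) m \<circ> eps m 0) x"
    using x assms by (auto simp: eps_ev eta_ev of_nat_diff)
qed (use assms in simp)

lemma L5c:
  assumes "1 \<le> i" "i + 1 \<le> m"
  shows "eps m 0 \<circ> eta (m-1) m \<circ> eps m i = eps m (i+1) \<circ> eps (m-1) 0 \<circ> eta (m-2) (m-1)"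
proof (rule qp_eqI[where p = "int m" and q = "int m + 1"])
  show "qp (int m) (int m + 1) (eps m 0 \<circ> eta (m-1) m \<circ> eps m i)" using assms by (intro qp_comp eps_qp' eta_qp' qp_id; simp)
  show "qp (int m) (int m + 1) (eps m (i+1) \<circ> eps (m-1) 0 \<circ> eta (m-2) (m-1))" using assms by (intro qp_comp eps_qp' eta_qp' qp_id; simp)
  fix x assume x: "0 \<le> x" "x < int m"
  show "(eps m 0 \<circ> eta (m-1) m \<circ> eps m i) x = (eps m (i+1) \<circ> eps (m-1) 0 \<circ> eta (m-2) (m-1)) x"
    using x assms by (auto simp: eps_ev eta_ev of_nat_diff)
qed (use assms in simp)

lemma L6a:
  assumes "1 \<le> m"
  shows "eta (m-1) 0 \<circ> eta m (m+1) \<circ> eps (m+1) 0 = eta (m-1) 0 \<circ> eps m 0 \<circ> eta (m-1) m"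
proof (rule qp_eqI[where p = "int m + 1" and q = "int m"])
  show "qp (int m + 1) (int m) (eta (m-1) 0 \<circ> eta m (m+1) \<circ> eps (m+1) 0)" using assms by (intro qp_comp eps_qp' eta_qp' qp_id; simp)
  show "qp (int m + 1) (int m) (eta (m-1) 0 \<circ> eps m 0 \<circ> eta (m-1) m)" using assms by (intro qp_comp eps_qp' eta_qp' qp_id; simp)
  fix x assume x: "0 \<le> x" "x < int m + 1"
  show "(eta (m-1) 0 \<circ> eta m (m+1) \<circ> eps (m+1) 0) x = (eta (m-1) 0 \<circ> eps m 0 \<circ> eta (m-1) m) x"
    using x assms by (auto simp: eps_ev eta_ev of_nat_diff)
qed simp

lemma L6b:
  assumes "1 \<le> j" "j + 1 \<le> m"
  shows "eta (m-1) j \<circ> eta m (m+1) \<circ> eps (m+1) 0 = eta (m-1) m \<circ> eps m 0 \<circ> eta (m-1) (j-1)"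
proof (rule qp_eqI[where p = "int m + 1" and q = "int m"])
  show "qp (int m + 1) (int m) (eta (m-1) j \<circ> eta m (m+1) \<circ> eps (m+1) 0)" using assms by (intro qp_comp eps_qp' eta_qp' qp_id; simp)
  show "qp (int m + 1) (int m) (eta (m-1) m \<circ> eps m 0 \<circ> eta (m-1) (j-1))" using assms by (intro qp_comp eps_qp' eta_qp' qp_id; simp)
  fix x assume x: "0 \<le> x" "x < int m + 1"
  show "(eta (m-1) j \<circ> eta m (m+1) \<circ> eps (m+1) 0) x = (eta (m-1) m \<circ> eps m 0 \<circ> eta (m-1) (j-1)) x"
    using x assms by (auto simp: eps_ev eta_ev of_nat_diff)
qed simp

lemma L6c:
  assumes "1 \<le> j" "j + 1 \<le> m"
  shows "eta (m-1) j \<circ> eps m 0 \<circ> eta (m-1) m = eps (m-1) 0 \<circ> eta (m-2) (m-1) \<circ> eta (m-1) (j-1)"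
proof (rule qp_eqI[where p = "int m + 1" and q = "int m"])
  show "qp (int m + 1) (int m) (eta (m-1) j \<circ> eps m 0 \<circ> eta (m-1) m)" using assms by (intro qp_comp eps_qp' eta_qp' qp_id; simp)
  show "qp (int m + 1) (int m) (eps (m-1) 0 \<circ> eta (m-2) (m-1) \<circ> eta (m-1) (j-1))" using assms by (intro qp_comp eps_qp' eta_qp' qp_id; simp)
  fix x assume x: "0 \<le> x" "x < int m + 1"
  show "(eta (m-1) j \<circ> eps m 0 \<circ> eta (m-1) m) x = (eps (m-1) 0 \<circ> eta (m-2) (m-1) \<circ> eta (m-1) (j-1)) x"
    using x assms by (auto simp: eps_ev eta_ev of_nat_diff)
qed simp


definition sg :: "nat \<Rightarrow> rr \<Rightarrow> rr" where "sg k x = (if even k then x else - x)"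

section \<open>Pre-additive categories and duplicial modules\<close>

locale dupl =
  fixes C :: "('o, 'm) preadd_cat" and MO :: "nat \<Rightarrow> 'o"
    and MM :: "nat \<Rightarrow> nat \<Rightarrow> (int \<Rightarrow> int) \<Rightarrow> 'm"
  assumes pa: "preadditive C" and du: "duplicial C MO MM"
begin

abbreviation hm where "hm \<equiv> Defs.hom C"

lemma MO_ob [simp]: "MO k \<in> Ob C"
  using du by (simp add: duplicial_def)

lemma MM_hom: "lam_mor m n f \<Longrightarrow> MM m n f \<in> hm (MO n) (MO m)"
  using du by (simp add: duplicial_def)

lemma MM_id: "MM m m id = Id C (MO m)"
  using du by (simp add: duplicial_def)

lemma MM_comp: "lam_mor l m f \<Longrightarrow> lam_mor m n g \<Longrightarrow> MM l n (g \<circ> f) = Comp C (MM l m f) (MM m n g)"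
  using du by (simp add: duplicial_def)

lemma pa_comp: "\<forall>a\<in>Ob C. \<forall>b\<in>Ob C. \<forall>c\<in>Ob C. \<forall>f\<in>hm a b. \<forall>g\<in>hm b c. Comp C g f \<in> hm a c"
  using pa unfolding preadditive_def by (elim conjE) assumption
lemma pa_id: "\<forall>a\<in>Ob C. Id C a \<in> hm a a"
  using pa unfolding preadditive_def by (elim conjE) assumption
lemma pa_unit: "\<forall>f\<in>Mor C. Comp C f (Id C (Dom C f)) = f \<and> Comp C (Id C (Cod C f)) f = f"
  using pa unfolding preadditive_def by (elim conjE) assumption
lemma pa_assoc: "\<forall>a\<in>Ob C. \<forall>b\<in>Ob C. \<forall>c\<in>Ob C. \<forall>d\<in>Ob C.
        \<forall>f\<in>hm a b. \<forall>g\<in>hm b c. \<forall>h\<in>hm c d.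
        Comp C h (Comp C g f) = Comp C (Comp C h g) f"
  using pa unfolding preadditive_def by (elim conjE) assumption
lemma pa_grp: "\<forall>a\<in>Ob C. \<forall>b\<in>Ob C.
        Zero C a b \<in> hm a b \<and>
        (\<forall>f\<in>hm a b. \<forall>g\<in>hm a b.
           Add C f g \<in> hm a b \<and> Add C f g = Add C g f) \<and>
        (\<forall>f\<in>hm a b. \<forall>g\<in>hm a b. \<forall>h\<in>hm a b.
           Add C (Add C f g) h = Add C f (Add C g h)) \<and>
        (\<forall>f\<in>hm a b. Add C f (Zero C a b) = f \<and>
           Neg C f \<in> hm a b \<and> Add C f (Neg C f) = Zero C a b)"
  using pa unfolding preadditive_def by (elim conjE) assumption
lemma pa_dist: "\<forall>a\<in>Ob C. \<forall>b\<in>Ob C. \<forall>c\<in>Ob C.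
        (\<forall>f\<in>hm a b. \<forall>f'\<in>hm a b. \<forall>g\<in>hm b c.
           Comp C g (Add C f f') = Add C (Comp C g f) (Comp C g f')) \<and>
        (\<forall>f\<in>hm a b. \<forall>g\<in>hm b c. \<forall>g'\<in>hm b c.
           Comp C (Add C g g') f = Add C (Comp C g f) (Comp C g' f))"
  using pa unfolding preadditive_def by (elim conjE) assumption

lemma comp_hom: "a \<in> Ob C \<Longrightarrow> b \<in> Ob C \<Longrightarrow> c \<in> Ob C \<Longrightarrow> f \<in> hm a b \<Longrightarrow> g \<in> hm b c \<Longrightarrow> Comp C g f \<in> hm a c"
  using pa_comp by blast

lemma id_hom: "a \<in> Ob C \<Longrightarrow> Id C a \<in> hm a a"
  using pa_id by blast

lemma comp_id_right: "a \<in> Ob C \<Longrightarrow> b \<in> Ob C \<Longrightarrow> f \<in> hm a b \<Longrightarrow> Comp C f (Id C a) = f"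
  using pa_unit unfolding Defs.hom_def by auto

lemma comp_id_left: "a \<in> Ob C \<Longrightarrow> b \<in> Ob C \<Longrightarrow> f \<in> hm a b \<Longrightarrow> Comp C (Id C b) f = f"
  using pa_unit unfolding Defs.hom_def by auto

lemma comp_assoc: "a \<in> Ob C \<Longrightarrow> b \<in> Ob C \<Longrightarrow> c \<in> Ob C \<Longrightarrow> d \<in> Ob C \<Longrightarrow>
   f \<in> hm a b \<Longrightarrow> g \<in> hm b c \<Longrightarrow> h \<in> hm c d \<Longrightarrow> Comp C h (Comp C g f) = Comp C (Comp C h g) f"
  using pa_assoc by blast

lemma zero_hom: "a \<in> Ob C \<Longrightarrow> b \<in> Ob C \<Longrightarrow> Zero C a b \<in> hm a b"
  using pa_grp by blast

lemma add_hom: "a \<in> Ob C \<Longrightarrow> b \<in> Ob C \<Longrightarrow> f \<in> hm a b \<Longrightarrow> g \<in> hm a b \<Longrightarrow> Add C f g \<in> hm a b"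
  using pa_grp by blast

lemma add_comm: "a \<in> Ob C \<Longrightarrow> b \<in> Ob C \<Longrightarrow> f \<in> hm a b \<Longrightarrow> g \<in> hm a b \<Longrightarrow> Add C f g = Add C g f"
  using pa_grp by blast

lemma add_assoc: "a \<in> Ob C \<Longrightarrow> b \<in> Ob C \<Longrightarrow> f \<in> hm a b \<Longrightarrow> g \<in> hm a b \<Longrightarrow> h \<in> hm a b \<Longrightarrow>
   Add C (Add C f g) h = Add C f (Add C g h)"
  using pa_grp by blast

lemma add_zero: "a \<in> Ob C \<Longrightarrow> b \<in> Ob C \<Longrightarrow> f \<in> hm a b \<Longrightarrow> Add C f (Zero C a b) = f"
  using pa_grp by blast

lemma neg_hom: "a \<in> Ob C \<Longrightarrow> b \<in> Ob C \<Longrightarrow> f \<in> hm a b \<Longrightarrow> Neg C f \<in> hm a b"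
  using pa_grp by blast

lemma add_neg: "a \<in> Ob C \<Longrightarrow> b \<in> Ob C \<Longrightarrow> f \<in> hm a b \<Longrightarrow> Add C f (Neg C f) = Zero C a b"
  using pa_grp by blast

lemma comp_add_right: "a \<in> Ob C \<Longrightarrow> b \<in> Ob C \<Longrightarrow> c \<in> Ob C \<Longrightarrow> f \<in> hm a b \<Longrightarrow> f' \<in> hm a b \<Longrightarrow> g \<in> hm b c \<Longrightarrow>
   Comp C g (Add C f f') = Add C (Comp C g f) (Comp C g f')"
  using pa_dist by blast

lemma comp_add_left: "a \<in> Ob C \<Longrightarrow> b \<in> Ob C \<Longrightarrow> c \<in> Ob C \<Longrightarrow> f \<in> hm a b \<Longrightarrow> g \<in> hm b c \<Longrightarrow> g' \<in> hm b c \<Longrightarrow>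
   Comp C (Add C g g') f = Add C (Comp C g f) (Comp C g' f)"
  using pa_dist by blast

definition GR :: "'o \<Rightarrow> 'o \<Rightarrow> 'm monoid" where
  "GR a b = \<lparr>carrier = hm a b, mult = Add C, one = Zero C a b\<rparr>"

lemma GR_simps [simp]: "carrier (GR a b) = hm a b" "mult (GR a b) = Add C" "one (GR a b) = Zero C a b"
  by (simp_all add: GR_def)

lemma GR_grp: assumes "a \<in> Ob C" "b \<in> Ob C" shows "comm_group (GR a b)"
proof (rule comm_groupI)
  fix x y z assume x: "x \<in> carrier (GR a b)" and y: "y \<in> carrier (GR a b)" and z: "z \<in> carrier (GR a b)"
  show "x \<otimes>\<^bsub>GR a b\<^esub> y \<in> carrier (GR a b)" using x y assms by (simp add: add_hom)
  show "x \<otimes>\<^bsub>GR a b\<^esub> y \<otimes>\<^bsub>GR a b\<^esub> z = x \<otimes>\<^bsub>GR a b\<^esub> (y \<otimes>\<^bsub>GR a b\<^esub> z)"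
    using x y z assms by (simp add: add_assoc)
  show "x \<otimes>\<^bsub>GR a b\<^esub> y = y \<otimes>\<^bsub>GR a b\<^esub> x" using x y assms by (simp add: add_comm)
next
  show "\<one>\<^bsub>GR a b\<^esub> \<in> carrier (GR a b)" using assms by (simp add: zero_hom)
next
  fix x assume x: "x \<in> carrier (GR a b)"
  show "\<one>\<^bsub>GR a b\<^esub> \<otimes>\<^bsub>GR a b\<^esub> x = x" using x assms by (simp add: add_comm zero_hom add_zero)
  show "\<exists>y\<in>carrier (GR a b). y \<otimes>\<^bsub>GR a b\<^esub> x = \<one>\<^bsub>GR a b\<^esub>"
    using x assms by (intro bexI[of _ "Neg C x"]) (simp_all add: neg_hom add_comm add_neg)
qed

lemma GR_inv: assumes "a \<in> Ob C" "b \<in> Ob C" "x \<in> hm a b" shows "inv\<^bsub>GR a b\<^esub> x = Neg C x"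
proof -
  interpret G: comm_group "GR a b" using GR_grp assms by blast
  show ?thesis using assms by (intro G.inv_equality) (simp_all add: neg_hom add_comm add_neg)
qed

lemma comp_zero_right: assumes "a \<in> Ob C" "b \<in> Ob C" "c \<in> Ob C" "g \<in> hm b c"
  shows "Comp C g (Zero C a b) = Zero C a c"
proof -
  interpret G: comm_group "GR a c" using GR_grp assms by blast
  let ?z = "Comp C g (Zero C a b)"
  have z: "?z \<in> hm a c" using assms by (simp add: comp_hom zero_hom)
  have "Add C ?z ?z = Comp C g (Add C (Zero C a b) (Zero C a b))"
    using assms by (simp add: comp_add_right zero_hom)
  also have "\<dots> = ?z" using assms by (simp add: add_zero zero_hom)
  finally have "?z \<otimes>\<^bsub>GR a c\<^esub> ?z = ?z" by simp
  then show ?thesis using z G.l_cancel_one[of ?z ?z] by simp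
qed

lemma comp_zero_left: assumes "a \<in> Ob C" "b \<in> Ob C" "c \<in> Ob C" "f \<in> hm a b"
  shows "Comp C (Zero C b c) f = Zero C a c"
proof -
  interpret G: comm_group "GR a c" using GR_grp assms by blast
  let ?z = "Comp C (Zero C b c) f"
  have z: "?z \<in> hm a c" using assms by (simp add: comp_hom zero_hom)
  have "Add C ?z ?z = Comp C (Add C (Zero C b c) (Zero C b c)) f"
    using assms by (simp add: comp_add_left zero_hom)
  also have "\<dots> = ?z" using assms by (simp add: add_zero zero_hom)
  finally have "?z \<otimes>\<^bsub>GR a c\<^esub> ?z = ?z" by simp
  then show ?thesis using z G.l_cancel_one[of ?z ?z] by simp
qed

lemma comp_neg_right: assumes "a \<in> Ob C" "b \<in> Ob C" "c \<in> Ob C" "f \<in> hm a b" "g \<in> hm b c"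
  shows "Comp C g (Neg C f) = Neg C (Comp C g f)"
proof -
  interpret G: comm_group "GR a c" using GR_grp assms by blast
  have "Add C (Comp C g (Neg C f)) (Comp C g f) = Comp C g (Add C (Neg C f) f)"
    using assms by (simp add: comp_add_right neg_hom)
  also have "\<dots> = Zero C a c" using assms by (simp add: add_comm neg_hom add_neg comp_zero_right)
  finally have "Comp C g (Neg C f) = inv\<^bsub>GR a c\<^esub> (Comp C g f)"
    using assms by (intro G.inv_equality[symmetric]) (simp_all add: comp_hom neg_hom)
  then show ?thesis using assms by (simp add: GR_inv comp_hom)
qed

lemma comp_neg_left: assumes "a \<in> Ob C" "b \<in> Ob C" "c \<in> Ob C" "f \<in> hm a b" "g \<in> hm b c"
  shows "Comp C (Neg C g) f = Neg C (Comp C g f)"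
proof -
  interpret G: comm_group "GR a c" using GR_grp assms by blast
  have "Add C (Comp C (Neg C g) f) (Comp C g f) = Comp C (Add C (Neg C g) g) f"
    using assms by (simp add: comp_add_left neg_hom)
  also have "\<dots> = Zero C a c" using assms by (simp add: add_comm neg_hom add_neg comp_zero_left)
  finally have "Comp C (Neg C g) f = inv\<^bsub>GR a c\<^esub> (Comp C g f)"
    using assms by (intro G.inv_equality[symmetric]) (simp_all add: comp_hom neg_hom)
  then show ?thesis using assms by (simp add: GR_inv comp_hom)
qed

end


context dupl
begin

lemma GR_pow_hom [simp]: "a \<in> Ob C \<Longrightarrow> b \<in> Ob C \<Longrightarrow> x \<in> hm a b \<Longrightarrow> x [^]\<^bsub>GR a b\<^esub> (k::int) \<in> hm a b"
proof -
  assume a: "a \<in> Ob C" and b: "b \<in> Ob C" and x: "x \<in> hm a b"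
  interpret G: comm_group "GR a b" using a b by (rule GR_grp)
  show ?thesis using G.int_pow_closed[of x k] x by simp
qed

definition LL :: "nat \<Rightarrow> nat \<Rightarrow> lm set" where "LL m n = {f. lam_mor m n (unLM f)}"

definition Phi :: "nat \<Rightarrow> nat \<Rightarrow> rr \<Rightarrow> 'm" where
  "Phi m n x = finprod (GR (MO n) (MO m))
      (\<lambda>f. MM m n (unLM f) [^]\<^bsub>GR (MO n) (MO m)\<^esub> (Poly_Mapping.lookup x f)) (Poly_Mapping.keys x)"

lemma Phi_super:
  assumes "finite S" "Poly_Mapping.keys x \<subseteq> S" "S \<subseteq> LL m n"
  shows "Phi m n x = finprod (GR (MO n) (MO m))
      (\<lambda>f. MM m n (unLM f) [^]\<^bsub>GR (MO n) (MO m)\<^esub> (Poly_Mapping.lookup x f)) S"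
proof -
  interpret G: comm_group "GR (MO n) (MO m)" by (rule GR_grp) simp_all
  show ?thesis unfolding Phi_def
  proof (rule G.finprod_mono_neutral_cong_left)
    show "finite S" "Poly_Mapping.keys x \<subseteq> S" by (fact assms)+
    show "(\<lambda>f. MM m n (unLM f) [^]\<^bsub>GR (MO n) (MO m)\<^esub> Poly_Mapping.lookup x f) \<in> S \<rightarrow> carrier (GR (MO n) (MO m))"
      using assms(3) by (auto simp: LL_def MM_hom)
  qed (auto simp: in_keys_iff)
qed

lemma Phi_hom: "Poly_Mapping.keys x \<subseteq> LL m n \<Longrightarrow> Phi m n x \<in> hm (MO n) (MO m)"
proof -
  assume a: "Poly_Mapping.keys x \<subseteq> LL m n"
  interpret G: comm_group "GR (MO n) (MO m)" by (rule GR_grp) simp_all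
  have "Phi m n x \<in> carrier (GR (MO n) (MO m))" unfolding Phi_def
    using a by (intro G.finprod_closed) (auto simp: LL_def MM_hom)
  then show ?thesis by simp
qed

lemma Phi_zero: "Phi m n 0 = Zero C (MO n) (MO m)"
proof -
  interpret G: comm_group "GR (MO n) (MO m)" by (rule GR_grp) simp_all
  show ?thesis by (simp add: Phi_def)
qed

lemma Phi_fr: "f \<in> LL m n \<Longrightarrow> Phi m n (frag_of f) = MM m n (unLM f)"
proof -
  assume a: "f \<in> LL m n"
  interpret G: comm_group "GR (MO n) (MO m)" by (rule GR_grp) simp_all
  have h: "MM m n (unLM f) \<in> carrier (GR (MO n) (MO m))" using a by (simp add: LL_def MM_hom)
  show ?thesis unfolding Phi_def using h by (simp add: add_zero)
qed

lemma Phi_add: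
  assumes "Poly_Mapping.keys x \<subseteq> LL m n" "Poly_Mapping.keys y \<subseteq> LL m n"
  shows "Phi m n (x + y) = Add C (Phi m n x) (Phi m n y)"
proof -
  interpret G: comm_group "GR (MO n) (MO m)" by (rule GR_grp) simp_all
  let ?S = "Poly_Mapping.keys x \<union> Poly_Mapping.keys y"
  let ?g = "\<lambda>(z::rr) f. MM m n (unLM f) [^]\<^bsub>GR (MO n) (MO m)\<^esub> (Poly_Mapping.lookup z f)"
  have S: "finite ?S" "?S \<subseteq> LL m n" using assms by auto
  have c: "\<And>z. ?g z \<in> ?S \<rightarrow> carrier (GR (MO n) (MO m))"
  proof (intro Pi_I)
    fix z f assume "f \<in> ?S"
    then have "lam_mor m n (unLM f)" using S by (auto simp: LL_def)
    then show "?g z f \<in> carrier (GR (MO n) (MO m))" by (simp add: MM_hom)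
  qed
  have "Phi m n (x + y) = finprod (GR (MO n) (MO m)) (?g (x + y)) ?S"
    using S keys_add[of x y] by (intro Phi_super) auto
  also have "\<dots> = finprod (GR (MO n) (MO m)) (\<lambda>f. ?g x f \<otimes>\<^bsub>GR (MO n) (MO m)\<^esub> ?g y f) ?S"
  proof (rule G.finprod_cong')
    fix f assume "f \<in> ?S"
    then have "MM m n (unLM f) \<in> carrier (GR (MO n) (MO m))" using S by (auto simp: LL_def MM_hom)
    then show "?g (x + y) f = ?g x f \<otimes>\<^bsub>GR (MO n) (MO m)\<^esub> ?g y f"
      by (simp add: lookup_add G.int_pow_mult)
  next
    show "(\<lambda>f. ?g x f \<otimes>\<^bsub>GR (MO n) (MO m)\<^esub> ?g y f) \<in> ?S \<rightarrow> carrier (GR (MO n) (MO m))"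
      using c[of x] c[of y] by (auto simp: Pi_iff intro!: add_hom)
  qed (use c in auto)
  also have "\<dots> = finprod (GR (MO n) (MO m)) (?g x) ?S \<otimes>\<^bsub>GR (MO n) (MO m)\<^esub> finprod (GR (MO n) (MO m)) (?g y) ?S"
    by (rule G.finprod_multf[OF c c])
  also have "\<dots> = Add C (Phi m n x) (Phi m n y)"
    using S by (simp add: Phi_super[symmetric])
  finally show ?thesis .
qed

lemma (in comm_group) finprod_inv':
  "f \<in> A \<rightarrow> carrier G \<Longrightarrow> finprod G (\<lambda>x. inv (f x)) A = inv (finprod G f A)"
proof (induct A rule: infinite_finite_induct)
  case (insert a A)
  then show ?case by (simp add: Pi_def inv_mult)
qed simp_all

lemma Phi_neg:
  assumes "Poly_Mapping.keys x \<subseteq> LL m n"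
  shows "Phi m n (- x) = Neg C (Phi m n x)"
proof -
  interpret G: comm_group "GR (MO n) (MO m)" by (rule GR_grp) simp_all
  let ?S = "Poly_Mapping.keys x"
  let ?g = "\<lambda>(z::rr) f. MM m n (unLM f) [^]\<^bsub>GR (MO n) (MO m)\<^esub> (Poly_Mapping.lookup z f)"
  have c: "\<And>z. ?g z \<in> ?S \<rightarrow> carrier (GR (MO n) (MO m))"
  proof (intro Pi_I)
    fix z f assume "f \<in> ?S"
    then have "lam_mor m n (unLM f)" using assms by (auto simp: LL_def)
    then show "?g z f \<in> carrier (GR (MO n) (MO m))" by (simp add: MM_hom)
  qed
  have "Phi m n (- x) = finprod (GR (MO n) (MO m)) (?g (- x)) ?S"
    by (simp add: Phi_def)
  also have "\<dots> = finprod (GR (MO n) (MO m)) (\<lambda>f. inv\<^bsub>GR (MO n) (MO m)\<^esub> (?g x f)) ?S"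
  proof (rule G.finprod_cong')
    fix f assume "f \<in> ?S"
    then have "MM m n (unLM f) \<in> carrier (GR (MO n) (MO m))" using assms by (auto simp: LL_def MM_hom)
    then show "?g (- x) f = inv\<^bsub>GR (MO n) (MO m)\<^esub> (?g x f)"
      by (simp add: G.int_pow_neg)
  next
    show "(\<lambda>f. inv\<^bsub>GR (MO n) (MO m)\<^esub> (?g x f)) \<in> ?S \<rightarrow> carrier (GR (MO n) (MO m))"
      using c[of x] by (auto simp: Pi_iff GR_inv intro!: neg_hom)
  qed (use c in auto)
  also have "\<dots> = inv\<^bsub>GR (MO n) (MO m)\<^esub> (Phi m n x)"
    using c by (simp add: G.finprod_inv' Phi_def)
  also have "\<dots> = Neg C (Phi m n x)" using Phi_hom[OF assms] by (simp add: GR_inv)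
  finally show ?thesis .
qed

end


context dupl
begin

lemma keys_mult_LL:
  assumes "Poly_Mapping.keys x \<subseteq> LL m k" "Poly_Mapping.keys y \<subseteq> LL k n"
  shows "Poly_Mapping.keys (y * x) \<subseteq> LL m n"
proof
  fix c assume "c \<in> Poly_Mapping.keys (y * x)"
  then obtain a b where c: "c = a + b" "a \<in> Poly_Mapping.keys y" "b \<in> Poly_Mapping.keys x"
    using keys_mult[of y x] by blast
  then have "lam_mor k n (unLM a)" "lam_mor m k (unLM b)" using assms by (auto simp: LL_def)
  then have "lam_mor m n (unLM a \<circ> unLM b)" by (rule lam_mor_comp[rotated])
  then show "c \<in> LL m n" using c by (simp add: LL_def plus_lm_def)
qed

lemma Phi_diff:
  assumes "Poly_Mapping.keys x \<subseteq> LL m n" "Poly_Mapping.keys y \<subseteq> LL m n"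
  shows "Phi m n (x - y) = Add C (Phi m n x) (Neg C (Phi m n y))"
proof -
  have k: "Poly_Mapping.keys (- y) \<subseteq> LL m n" using assms(2) by simp
  have "Phi m n (x + - y) = Add C (Phi m n x) (Phi m n (- y))" using assms(1) k by (rule Phi_add)
  then show ?thesis using Phi_neg[OF assms(2)] by simp
qed

lemma keys_diff_LL: "Poly_Mapping.keys x \<subseteq> S \<Longrightarrow> Poly_Mapping.keys y \<subseteq> S \<Longrightarrow> Poly_Mapping.keys (x - y) \<subseteq> S"
  using keys_diff[of x y] by blast

lemma Phi_mult_fr:
  assumes g: "g \<in> LL k n" and x: "Poly_Mapping.keys x \<subseteq> LL m k"
  shows "Phi m n (frag_of g * x) = Comp C (Phi m k x) (MM k n (unLM g))"
proof -
  have Mg: "MM k n (unLM g) \<in> hm (MO n) (MO k)" using g by (simp add: LL_def MM_hom)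
  have gk: "Poly_Mapping.keys (frag_of g) \<subseteq> LL k n" using g by simp
  have "Poly_Mapping.keys x \<subseteq> LL m k \<and> Phi m n (frag_of g * x) = Comp C (Phi m k x) (MM k n (unLM g))"
    using x
  proof (induction x rule: frag_induction)
    case zero
    show ?case using comp_zero_left[of "MO n" "MO k" "MO m" "MM k n (unLM g)"] Mg by (simp add: Phi_zero)
  next
    case (one f)
    have f: "lam_mor m k (unLM f)" using one by (simp add: LL_def)
    have gg: "lam_mor k n (unLM g)" using g by (simp add: LL_def)
    have "frag_of g * frag_of f = frag_of (LM (unLM g \<circ> unLM f))"
      by (simp add: mult_single plus_lm_def)
    moreover have "LM (unLM g \<circ> unLM f) \<in> LL m n" using lam_mor_comp[OF f gg] by (simp add: LL_def)
    ultimately have "Phi m n (frag_of g * frag_of f) = MM m n (unLM g \<circ> unLM f)"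
      by (simp add: Phi_fr)
    also have "\<dots> = Comp C (MM m k (unLM f)) (MM k n (unLM g))" using f gg by (rule MM_comp)
    finally show ?case using one by (simp add: Phi_fr)
  next
    case (diff a b)
    have ka: "Poly_Mapping.keys (frag_of g * a) \<subseteq> LL m n" using diff keys_mult_LL[OF _ gk] by blast
    have kb: "Poly_Mapping.keys (frag_of g * b) \<subseteq> LL m n" using diff keys_mult_LL[OF _ gk] by blast
    have ha: "Phi m k a \<in> hm (MO k) (MO m)" using diff Phi_hom by blast
    have hb: "Phi m k b \<in> hm (MO k) (MO m)" using diff Phi_hom by blast
    have "Phi m n (frag_of g * (a - b)) = Phi m n (frag_of g * a - frag_of g * b)"
      by (simp add: right_diff_distrib)
    also have "\<dots> = Add C (Comp C (Phi m k a) (MM k n (unLM g))) (Neg C (Comp C (Phi m k b) (MM k n (unLM g))))"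
      using ka kb diff by (simp add: Phi_diff)
    also have "\<dots> = Comp C (Add C (Phi m k a) (Neg C (Phi m k b))) (MM k n (unLM g))"
      using comp_add_left[of "MO n" "MO k" "MO m" "MM k n (unLM g)" "Phi m k a" "Neg C (Phi m k b)"]
        comp_neg_left[of "MO n" "MO k" "MO m" "MM k n (unLM g)" "Phi m k b"]
        neg_hom[of "MO k" "MO m" "Phi m k b"] ha hb Mg by simp
    also have "\<dots> = Comp C (Phi m k (a - b)) (MM k n (unLM g))"
      using diff by (simp add: Phi_diff)
    finally show ?case using diff keys_diff_LL by blast
  qed
  then show ?thesis by blast
qed

lemma Phi_mult:
  assumes x: "Poly_Mapping.keys x \<subseteq> LL m k" and y: "Poly_Mapping.keys y \<subseteq> LL k n"
  shows "Phi m n (y * x) = Comp C (Phi m k x) (Phi k n y)"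
proof -
  have hx: "Phi m k x \<in> hm (MO k) (MO m)" using x by (rule Phi_hom)
  have "Poly_Mapping.keys y \<subseteq> LL k n \<and> Phi m n (y * x) = Comp C (Phi m k x) (Phi k n y)"
    using y
  proof (induction y rule: frag_induction)
    case zero
    show ?case using comp_zero_right[of "MO n" "MO k" "MO m" "Phi m k x"] hx by (simp add: Phi_zero)
  next
    case (one g)
    then show ?case using x by (simp add: Phi_mult_fr Phi_fr)
  next
    case (diff a b)
    have ka: "Poly_Mapping.keys (a * x) \<subseteq> LL m n" using diff keys_mult_LL[OF x] by blast
    have kb: "Poly_Mapping.keys (b * x) \<subseteq> LL m n" using diff keys_mult_LL[OF x] by blast
    have ha: "Phi k n a \<in> hm (MO n) (MO k)" using diff Phi_hom by blast
    have hb: "Phi k n b \<in> hm (MO n) (MO k)" using diff Phi_hom by blast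
    have "Phi m n ((a - b) * x) = Phi m n (a * x - b * x)"
      by (simp add: left_diff_distrib)
    also have "\<dots> = Add C (Comp C (Phi m k x) (Phi k n a)) (Neg C (Comp C (Phi m k x) (Phi k n b)))"
      using ka kb diff by (simp add: Phi_diff)
    also have "\<dots> = Comp C (Phi m k x) (Add C (Phi k n a) (Neg C (Phi k n b)))"
      using comp_add_right[of "MO n" "MO k" "MO m" "Phi k n a" "Neg C (Phi k n b)" "Phi m k x"]
        comp_neg_right[of "MO n" "MO k" "MO m" "Phi k n b" "Phi m k x"]
        neg_hom[of "MO n" "MO k" "Phi k n b"] ha hb hx by simp
    also have "\<dots> = Comp C (Phi m k x) (Phi k n (a - b))"
      using diff by (simp add: Phi_diff)
    finally show ?case using diff keys_diff_LL by blast
  qed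
  then show ?thesis by blast
qed

definition rep :: "nat \<Rightarrow> nat \<Rightarrow> rr \<Rightarrow> 'm \<Rightarrow> bool" where
  "rep m n x X \<longleftrightarrow> Poly_Mapping.keys x \<subseteq> LL m n \<and> Phi m n x = X"

lemma rep_unique: "rep m n x X \<Longrightarrow> rep m n x Y \<Longrightarrow> X = Y"
  by (simp add: rep_def)

lemma rep_hom: "rep m n x X \<Longrightarrow> X \<in> hm (MO n) (MO m)"
  by (auto simp: rep_def Phi_hom)

lemma rep_zero: "rep m n 0 (Zero C (MO n) (MO m))"
  by (simp add: rep_def Phi_zero)

lemma rep_fr: "lam_mor m n f \<Longrightarrow> rep m n (fr f) (MM m n f)"
  by (simp add: rep_def fr_def LL_def Phi_fr)

lemma rep_add: "rep m n x X \<Longrightarrow> rep m n y Y \<Longrightarrow> rep m n (x + y) (Add C X Y)"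
  unfolding rep_def using keys_add[of x y] by (auto simp: Phi_add)

lemma rep_neg: "rep m n x X \<Longrightarrow> rep m n (- x) (Neg C X)"
  unfolding rep_def by (auto simp: Phi_neg)

lemma rep_mult: "rep m k x X \<Longrightarrow> rep k n y Y \<Longrightarrow> rep m n (y * x) (Comp C X Y)"
  unfolding rep_def using keys_mult_LL[of x m k y n] Phi_mult[of x m k y n] by auto

lemma rep_one: "rep m m 1 (Id C (MO m))"
  using rep_fr[OF lam_mor_id, of m] by (simp add: fr_id MM_id)


lemma rep_sgn: "rep m n x X \<Longrightarrow> rep m n (sg k x) (sgn_mor C k X)"
  by (simp add: sg_def sgn_mor_def rep_neg)

lemma rep_alt_list:
  assumes "\<And>i. i \<in> set xs \<Longrightarrow> rep m n (f i) (F i)"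
  shows "rep m n (sum_list (map (\<lambda>i. sg i (f i)) xs))
           (foldr (\<lambda>i acc. Add C (sgn_mor C i (F i)) acc) xs (Zero C (MO n) (MO m)))"
  using assms
proof (induct xs)
  case Nil then show ?case by (simp add: rep_zero)
next
  case (Cons a xs)
  then show ?case by (simp add: rep_add rep_sgn)
qed

lemma rep_alt:
  assumes "\<And>i. i < k \<Longrightarrow> rep m n (f i) (F i)"
  shows "rep m n (\<Sum>i<k. sg i (f i)) (alt_sum C (MO n) (MO m) F k)"
proof -
  have "(\<Sum>i<k. sg i (f i)) = sum_list (map (\<lambda>i. sg i (f i)) [0..<k])"
    by (induct k) simp_all
  then show ?thesis unfolding alt_sum_def using assms rep_alt_list[of "[0..<k]" m n f F] by simp
qed

lemma rep_pow: "rep m m x X \<Longrightarrow> rep m m (x ^ k) (mpow C (MO m) X k)"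
proof (induct k)
  case 0 then show ?case by (simp add: mpow_def rep_one)
next
  case (Suc k)
  then have "rep m m (x ^ k * x) (Comp C X (mpow C (MO m) X k))" by (simp add: rep_mult)
  then show ?case by (simp add: mpow_def power_commutes)
qed

lemma rep_one_minus: "rep m m x X \<Longrightarrow> rep m m (1 - x) (one_minus C (MO m) X)"
proof -
  assume "rep m m x X"
  then have "rep m m (1 + - x) (Add C (Id C (MO m)) (Neg C X))" by (intro rep_add rep_one rep_neg)
  then show ?thesis by (simp add: one_minus_def)
qed

end


section \<open>Algebra in the monoid ring\<close>

lemma sg_0 [simp]: "sg 0 x = x" by (simp add: sg_def)
lemma sg_Suc: "sg (Suc k) x = - sg k x" by (simp add: sg_def)
lemma sg_add_idx: "sg (k + l) x = sg k (sg l x)" by (simp add: sg_def)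
lemma sg_mult_left: "sg k x * y = sg k (x * y)" by (simp add: sg_def)
lemma sg_mult_right: "x * sg k y = sg k (x * y)" by (simp add: sg_def)
lemma sg_plus: "sg k (x + y) = sg k x + sg k y" by (simp add: sg_def)
lemma sg_minus: "sg k (- x) = - sg k x" by (simp add: sg_def)
lemma sg_diff: "sg k (x - y) = sg k x - sg k y" by (simp add: sg_def)
lemma sg_zero [simp]: "sg k 0 = 0" by (simp add: sg_def)
lemma sg_sg [simp]: "sg k (sg k x) = x" by (simp add: sg_def)
lemma sg_mult: "sg i x * sg j y = sg (i + j) (x * y)" by (simp add: sg_def)
lemma sg_sum: "sg k (sum f A) = (\<Sum>i\<in>A. sg k (f i))"
  by (simp add: sg_def sum_negf)

definition E :: "nat \<Rightarrow> nat \<Rightarrow> rr" where "E n i = fr (eps n i)"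
definition H :: "nat \<Rightarrow> nat \<Rightarrow> rr" where "H n i = fr (eta n i)"
definition Bo :: "nat \<Rightarrow> rr" where "Bo n = (\<Sum>i<Suc n. sg i (E n i))"
definition Do :: "nat \<Rightarrow> rr" where "Do n = (\<Sum>i<Suc (Suc n). sg i (H n i))"
definition Dp :: "nat \<Rightarrow> rr" where "Dp n = (\<Sum>i<Suc n. sg i (H n i))"
definition be :: "nat \<Rightarrow> rr" where "be n = (\<Sum>i<n. sg (Suc i) (E n (Suc i)))"
definition Ka :: "nat \<Rightarrow> rr" where
  "Ka n = sg n (H n (n+1) * E (n+1) 0 + - (E n 0 * H (n-1) n))"

lemma sum_cancel:
  fixes g :: "'a \<Rightarrow> 'b::ab_group_add"
  assumes "finite A" "A = P \<union> Q" "P \<inter> Q = {}" "bij_betw \<sigma> P Q" "\<And>p. p \<in> P \<Longrightarrow> g (\<sigma> p) = - g p"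
  shows "sum g A = 0"
proof -
  have fin: "finite P" "finite Q" using assms(1,2) by auto
  have "sum g A = sum g P + sum g Q" using assms(2,3) fin by (simp add: sum.union_disjoint)
  also have "sum g Q = sum (\<lambda>p. g (\<sigma> p)) P" by (rule sum.reindex_bij_betw[OF assms(4), symmetric])
  also have "\<dots> = sum (\<lambda>p. - g p) P" using assms(5) by (rule sum.cong[OF refl])
  finally show ?thesis by (simp add: sum_negf)
qed

lemma BoBo: assumes "1 \<le> n" shows "Bo (Suc n) * Bo n = 0"
proof -
  let ?A = "{..<Suc (Suc n)} \<times> {..<Suc n}"
  let ?g = "\<lambda>(i, j). sg (i + j) (fr (eps (Suc n) i \<circ> eps n j))"
  have "Bo (Suc n) * Bo n = (\<Sum>i<Suc (Suc n). \<Sum>j<Suc n. sg i (E (Suc n) i) * sg j (E n j))"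
    unfolding Bo_def by (rule sum_product)
  also have "\<dots> = (\<Sum>i<Suc (Suc n). \<Sum>j<Suc n. ?g (i, j))"
    by (intro sum.cong refl) (simp add: sg_mult E_def fr_mult)
  also have "\<dots> = sum ?g ?A" by (rule sum.cartesian_product'[symmetric])
  also have "\<dots> = 0"
  proof (rule sum_cancel)
    show "finite ?A" by simp
    show "?A = {p \<in> ?A. fst p \<le> snd p} \<union> {p \<in> ?A. snd p < fst p}" by auto
    show "{p \<in> ?A. fst p \<le> snd p} \<inter> {p \<in> ?A. snd p < fst p} = {}" by auto
    show "bij_betw (\<lambda>(i, j). (Suc j, i)) {p \<in> ?A. fst p \<le> snd p} {p \<in> ?A. snd p < fst p}"
      by (rule bij_betw_byWitness[where f' = "\<lambda>(a, b). (b, a - 1)"]) auto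
    fix p assume "p \<in> {p \<in> ?A. fst p \<le> snd p}"
    then obtain i j where p: "p = (i, j)" "i \<le> j" "j \<le> n" by auto
    have "eps (n+1) i \<circ> eps n j = eps (n+1) (j+1) \<circ> eps n i" using L1 assms p by blast
    then show "?g ((\<lambda>(i, j). (Suc j, i)) p) = - ?g p"
      using p by (simp add: sg_Suc add.commute)
  qed
  finally show ?thesis .
qed

lemma DoDo: "Do n * Do (Suc n) = 0"
proof -
  let ?A = "{..<Suc (Suc n)} \<times> {..<Suc (Suc (Suc n))}"
  let ?g = "\<lambda>(a, b). sg (a + b) (fr (eta n a \<circ> eta (Suc n) b))"
  have "Do n * Do (Suc n) = (\<Sum>a<Suc (Suc n). \<Sum>b<Suc (Suc (Suc n)). sg a (H n a) * sg b (H (Suc n) b))"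
    unfolding Do_def by (rule sum_product)
  also have "\<dots> = (\<Sum>a<Suc (Suc n). \<Sum>b<Suc (Suc (Suc n)). ?g (a, b))"
    by (intro sum.cong refl) (simp add: sg_mult H_def fr_mult)
  also have "\<dots> = sum ?g ?A" by (rule sum.cartesian_product'[symmetric])
  also have "\<dots> = 0"
  proof (rule sum_cancel)
    show "finite ?A" by simp
    show "?A = {p \<in> ?A. snd p \<le> fst p} \<union> {p \<in> ?A. fst p < snd p}" by auto
    show "{p \<in> ?A. snd p \<le> fst p} \<inter> {p \<in> ?A. fst p < snd p} = {}" by auto
    show "bij_betw (\<lambda>(a, b). (b, Suc a)) {p \<in> ?A. snd p \<le> fst p} {p \<in> ?A. fst p < snd p}"
      by (rule bij_betw_byWitness[where f' = "\<lambda>(a, b). (b - 1, a)"]) auto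
    fix p assume "p \<in> {p \<in> ?A. snd p \<le> fst p}"
    then obtain a b where p: "p = (a, b)" "b \<le> a" "a \<le> n + 1" by auto
    have "eta n a \<circ> eta (n+1) b = eta n b \<circ> eta (n+1) (a+1)" using L2 p by blast
    then show "?g ((\<lambda>(a, b). (b, Suc a)) p) = - ?g p"
      using p by (simp add: sg_Suc add.commute)
  qed
  finally show ?thesis .
qed


lemma sum_match:
  fixes g1 g2 :: "'a \<Rightarrow> 'b::ab_group_add"
  assumes "bij_betw \<sigma> P Q" "\<And>p. p \<in> P \<Longrightarrow> g1 p = - g2 (\<sigma> p)"
  shows "sum g1 P = - sum g2 Q"
proof -
  have "sum g2 Q = sum (\<lambda>p. g2 (\<sigma> p)) P" by (rule sum.reindex_bij_betw[OF assms(1), symmetric])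
  moreover have "sum g1 P = sum (\<lambda>p. - g2 (\<sigma> p)) P" using assms(2) by (rule sum.cong[OF refl])
  ultimately show ?thesis by (simp add: sum_negf)
qed

lemma Dobe:
  assumes n: "1 \<le> n"
  shows "Do n * be (Suc n) + be n * Do (n - 1) = 0"
proof -
  let ?A1 = "{..<Suc (Suc n)} \<times> {..<Suc n}"
  let ?A2 = "{..<n} \<times> {..<Suc n}"
  let ?g1 = "\<lambda>(j, i). sg (j + Suc i) (fr (eta n j \<circ> eps (Suc n) (Suc i)))"
  let ?g2 = "\<lambda>(i, j). sg (Suc i + j) (fr (eps n (Suc i) \<circ> eta (n - 1) j))"
  have ss: "Suc (Suc (n - 1)) = Suc n" using n by simp
  have F1: "Do n * be (Suc n) = sum ?g1 ?A1"
  proof -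
    have "Do n * be (Suc n) = (\<Sum>j<Suc (Suc n). \<Sum>i<Suc n. sg j (H n j) * sg (Suc i) (E (Suc n) (Suc i)))"
      unfolding Do_def be_def by (rule sum_product)
    also have "\<dots> = (\<Sum>j<Suc (Suc n). \<Sum>i<Suc n. ?g1 (j, i))"
      by (intro sum.cong refl) (simp add: sg_mult E_def H_def fr_mult)
    also have "\<dots> = sum ?g1 ?A1" by (rule sum.cartesian_product'[symmetric])
    finally show ?thesis .
  qed
  have F2: "be n * Do (n - 1) = sum ?g2 ?A2"
  proof -
    have "be n * Do (n - 1) = (\<Sum>i<n. \<Sum>j<Suc n. sg (Suc i) (E n (Suc i)) * sg j (H (n - 1) j))"
      unfolding Do_def be_def ss by (rule sum_product)
    also have "\<dots> = (\<Sum>i<n. \<Sum>j<Suc n. ?g2 (i, j))"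
      by (intro sum.cong refl) (simp add: sg_mult E_def H_def fr_mult)
    also have "\<dots> = sum ?g2 ?A2" by (rule sum.cartesian_product'[symmetric])
    finally show ?thesis .
  qed
  let ?D = "{p \<in> ?A1. Suc (snd p) = fst p} \<union> {p \<in> ?A1. snd p = fst p}"
  let ?U = "{p \<in> ?A1. Suc (snd p) < fst p}"
  let ?L = "{p \<in> ?A1. fst p < snd p}"
  let ?A2a = "{p \<in> ?A2. Suc (fst p) \<le> snd p}"
  let ?A2b = "{p \<in> ?A2. snd p < Suc (fst p)}"
  have split1: "sum ?g1 ?A1 = sum ?g1 ?D + sum ?g1 ?U + sum ?g1 ?L"
  proof -
    have "?A1 = (?D \<union> ?U) \<union> ?L" by auto
    then have "sum ?g1 ?A1 = sum ?g1 ((?D \<union> ?U) \<union> ?L)" by simp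
    also have "\<dots> = sum ?g1 (?D \<union> ?U) + sum ?g1 ?L" by (rule sum.union_disjoint) auto
    also have "sum ?g1 (?D \<union> ?U) = sum ?g1 ?D + sum ?g1 ?U" by (rule sum.union_disjoint) auto
    finally show ?thesis .
  qed
  have split2: "sum ?g2 ?A2 = sum ?g2 ?A2a + sum ?g2 ?A2b"
  proof -
    have "?A2 = ?A2a \<union> ?A2b" by auto
    then have "sum ?g2 ?A2 = sum ?g2 (?A2a \<union> ?A2b)" by simp
    also have "\<dots> = sum ?g2 ?A2a + sum ?g2 ?A2b" by (rule sum.union_disjoint) auto
    finally show ?thesis .
  qed
  have sD: "sum ?g1 ?D = 0"
  proof (rule sum_cancel)
    show "finite ?D" by simp
    show "?D = {p \<in> ?A1. Suc (snd p) = fst p} \<union> {p \<in> ?A1. snd p = fst p}" ..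
    show "{p \<in> ?A1. Suc (snd p) = fst p} \<inter> {p \<in> ?A1. snd p = fst p} = {}" by auto
    show "bij_betw (\<lambda>(j, i). (i, i)) {p \<in> ?A1. Suc (snd p) = fst p} {p \<in> ?A1. snd p = fst p}"
      by (rule bij_betw_byWitness[where f' = "\<lambda>(j, i). (Suc i, i)"]) auto
    fix p assume "p \<in> {p \<in> ?A1. Suc (snd p) = fst p}"
    then obtain i where p: "p = (Suc i, i)" "i \<le> n" by auto
    have a: "eta n (Suc i) \<circ> eps (Suc n) (Suc i) = id" using L3b[of "Suc i" "Suc i" n] p by simp
    have b: "eta n i \<circ> eps (Suc n) (Suc i) = id" using L3b[of "Suc i" i n] p by simp
    show "?g1 ((\<lambda>(j, i). (i, i)) p) = - ?g1 p"
      using p a b by (simp add: sg_def)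
  qed
  have sU: "sum ?g1 ?U = - sum ?g2 ?A2a"
  proof (rule sum_match)
    show "bij_betw (\<lambda>(j, i). (i, j - 1)) ?U ?A2a"
      by (rule bij_betw_byWitness[where f' = "\<lambda>(i, j). (Suc j, i)"]) auto
    fix p assume "p \<in> ?U"
    then obtain j i where p: "p = (j, i)" "Suc i < j" "j \<le> Suc n" by auto
    have "eta n j \<circ> eps (n+1) (Suc i) = eps n (Suc i) \<circ> eta (n-1) (j-1)"
      using L3a[of n "Suc i" j] n p by simp
    moreover obtain j' where j': "j = Suc j'" using p by (cases j) auto
    ultimately show "?g1 p = - ?g2 ((\<lambda>(j, i). (i, j - 1)) p)"
      using p by (simp add: sg_Suc add.commute)
  qed
  have sL: "sum ?g1 ?L = - sum ?g2 ?A2b"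
  proof (rule sum_match)
    show "bij_betw (\<lambda>(j, i). (i - 1, j)) ?L ?A2b"
      by (rule bij_betw_byWitness[where f' = "\<lambda>(i, j). (j, Suc i)"]) auto
    fix p assume "p \<in> ?L"
    then obtain j i where p: "p = (j, i)" "j < i" "i \<le> n" by auto
    have "eta n j \<circ> eps (n+1) (Suc i) = eps n (Suc i - 1) \<circ> eta (n-1) j"
      using L3c[of n j "Suc i"] n p by simp
    moreover obtain i' where i': "i = Suc i'" using p by (cases i) auto
    ultimately show "?g1 p = - ?g2 ((\<lambda>(j, i). (i - 1, j)) p)"
      using p by (simp add: sg_Suc add.commute)
  qed
  show ?thesis using F1 F2 split1 split2 sD sU sL by simp
qed


lemma H0E0: "H n 0 * E (Suc n) 0 = 1"
  using L3b[of 0 0 n] by (simp add: H_def E_def fr_mult fr_id)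

lemma Bo_split: "Bo (Suc n) = E (Suc n) 0 + be (Suc n)"
  unfolding Bo_def be_def by (subst sum.lessThan_Suc_shift) simp

lemma Do_split: "Do n = Dp n + sg (Suc n) (H n (Suc n))"
  unfolding Do_def Dp_def by simp

lemma DoE:
  assumes n: "1 \<le> n"
  shows "Do n * E (Suc n) 0 + E n 0 * Do (n - 1) = 1 - Ka n"
proof -
  let ?F = "\<lambda>j. fr (eps n 0 \<circ> eta (n - 1) j)"
  have ss: "Suc (Suc (n - 1)) = Suc n" using n by simp
  have a: "Do n * E (Suc n) 0 = (\<Sum>j<Suc (Suc n). sg j (H n j * E (Suc n) 0))"
    unfolding Do_def by (simp only: sum_distrib_right sg_mult_left)
  also have "\<dots> = H n 0 * E (Suc n) 0 + ((\<Sum>j<n. sg (Suc j) (H n (Suc j) * E (Suc n) 0)) + sg (Suc n) (H n (Suc n) * E (Suc n) 0))"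
    by (subst sum.lessThan_Suc_shift) simp
  also have "(\<Sum>j<n. sg (Suc j) (H n (Suc j) * E (Suc n) 0)) = (\<Sum>j<n. sg (Suc j) (?F j))"
  proof (rule sum.cong[OF refl])
    fix j assume "j \<in> {..<n}"
    then have "eta n (Suc j) \<circ> eps (n + 1) 0 = eps n 0 \<circ> eta (n - 1) j" using L4[of "Suc j" n] by simp
    then show "sg (Suc j) (H n (Suc j) * E (Suc n) 0) = sg (Suc j) (?F j)" by (simp add: H_def E_def fr_mult)
  qed
  finally have A: "Do n * E (Suc n) 0 = 1 + ((\<Sum>j<n. sg (Suc j) (?F j)) + sg (Suc n) (H n (Suc n) * E (Suc n) 0))"
    by (simp add: H0E0)
  have B: "E n 0 * Do (n - 1) = (\<Sum>j<n. sg j (?F j)) + sg n (E n 0 * H (n - 1) n)"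
    unfolding Do_def ss sum_distrib_left by (simp add: sg_mult_right H_def E_def fr_mult)
  have C: "(\<Sum>j<n. sg (Suc j) (?F j)) = - (\<Sum>j<n. sg j (?F j))"
    by (simp add: sg_Suc sum_negf)
  show ?thesis using A B C by (simp add: Ka_def sg_plus sg_minus sg_Suc sg_diff)
qed

lemma KE_top: "Ka (Suc m) * E (Suc m) (Suc m) = 0"
  using L5a[of "Suc m"]
  by (simp add: Ka_def sg_mult_left H_def E_def fr_mult left_diff_distrib)

lemma KE_mid:
  assumes "1 \<le> i" "i \<le> m"
  shows "Ka (Suc m) * E (Suc m) i = - (E (Suc m) (Suc i) * Ka m)"
proof -
  have m: "1 \<le> m" using assms by simp
  have b: "eta (Suc m) (Suc m + 1) \<circ> eps (Suc m + 1) 0 \<circ> eps (Suc m) i = eps (Suc m) (i + 1) \<circ> eta m (Suc m) \<circ> eps (Suc m) 0"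
    using L5b[of i "Suc m"] assms by simp
  have c: "eps (Suc m) 0 \<circ> eta m (Suc m) \<circ> eps (Suc m) i = eps (Suc m) (i + 1) \<circ> eps m 0 \<circ> eta (m - 1) m"
    using L5c[of i "Suc m"] assms by simp
  show ?thesis using b c m
    by (simp add: Ka_def sg_mult_left sg_mult_right H_def E_def fr_mult left_diff_distrib right_diff_distrib o_assoc sg_Suc sg_plus sg_minus)
qed

lemma HK_zero: "H m 0 * Ka (Suc m) = 0"
  using L6a[of "Suc m"]
  by (simp add: Ka_def sg_mult_right H_def E_def fr_mult right_diff_distrib o_assoc)

lemma HK_mid:
  assumes "1 \<le> j" "j \<le> m"
  shows "H m j * Ka (Suc m) = - (Ka m * H m (j - 1))"
proof -
  have m: "1 \<le> m" using assms by simp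
  have b: "eta m j \<circ> eta (Suc m) (Suc m + 1) \<circ> eps (Suc m + 1) 0 = eta m (Suc m) \<circ> eps (Suc m) 0 \<circ> eta m (j - 1)"
    using L6b[of j "Suc m"] assms by simp
  have c: "eta m j \<circ> eps (Suc m) 0 \<circ> eta m (Suc m) = eps m 0 \<circ> eta (m - 1) m \<circ> eta m (j - 1)"
    using L6c[of j "Suc m"] assms by simp
  show ?thesis using b c m
    by (simp add: Ka_def sg_mult_left sg_mult_right H_def E_def fr_mult left_diff_distrib right_diff_distrib o_assoc sg_Suc sg_plus sg_minus)
qed


lemma K_eq:
  assumes n: "1 \<le> n"
  shows "Ka n = 1 - Do n * Bo (Suc n) - Bo n * Do (n - 1)"
proof -
  have bn: "Bo n = E n 0 + be n" using Bo_split[of "n - 1"] n by simp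
  have "Do n * Bo (Suc n) + Bo n * Do (n - 1) =
        (Do n * E (Suc n) 0 + E n 0 * Do (n - 1)) + (Do n * be (Suc n) + be n * Do (n - 1))"
    by (simp add: Bo_split bn algebra_simps)
  also have "\<dots> = 1 - Ka n" using DoE[OF n] Dobe[OF n] by simp
  finally show ?thesis by (simp add: algebra_simps)
qed

lemma BoK:
  assumes n: "1 \<le> n"
  shows "Bo (Suc n) * Ka n = Ka (Suc n) * Bo (Suc n)"
proof -
  have k1: "Ka n = 1 - Do n * Bo (Suc n) - Bo n * Do (n - 1)" by (rule K_eq[OF n])
  have k2: "Ka (Suc n) = 1 - Do (Suc n) * Bo (Suc (Suc n)) - Bo (Suc n) * Do n" using K_eq[of "Suc n"] by simp
  have z1: "Bo (Suc n) * (Bo n * Do (n - 1)) = 0" using BoBo[OF n] by (simp add: mult.assoc[symmetric])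
  have z2: "Do (Suc n) * (Bo (Suc (Suc n)) * Bo (Suc n)) = 0" using BoBo[of "Suc n"] by simp
  have "Bo (Suc n) * Ka n = Bo (Suc n) - Bo (Suc n) * (Do n * Bo (Suc n)) - Bo (Suc n) * (Bo n * Do (n - 1))"
    unfolding k1 by (simp add: right_diff_distrib)
  also have "\<dots> = Bo (Suc n) - Bo (Suc n) * (Do n * Bo (Suc n))" using z1 by simp
  also have "\<dots> = Bo (Suc n) - Do (Suc n) * (Bo (Suc (Suc n)) * Bo (Suc n)) - Bo (Suc n) * (Do n * Bo (Suc n))"
    using z2 by simp
  also have "\<dots> = Ka (Suc n) * Bo (Suc n)"
    unfolding k2 by (simp add: left_diff_distrib mult.assoc)
  finally show ?thesis .
qed

lemma DoK:
  assumes n: "1 \<le> n"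
  shows "Do n * Ka (Suc n) = Ka n * Do n"
proof -
  have k1: "Ka n = 1 - Do n * Bo (Suc n) - Bo n * Do (n - 1)" by (rule K_eq[OF n])
  have k2: "Ka (Suc n) = 1 - Do (Suc n) * Bo (Suc (Suc n)) - Bo (Suc n) * Do n" using K_eq[of "Suc n"] by simp
  have z1: "Do n * (Do (Suc n) * Bo (Suc (Suc n))) = 0" using DoDo[of n] by (simp add: mult.assoc[symmetric])
  have z2: "Bo n * (Do (n - 1) * Do n) = 0" using DoDo[of "n - 1"] n by simp
  have "Do n * Ka (Suc n) = Do n - Do n * (Do (Suc n) * Bo (Suc (Suc n))) - Do n * (Bo (Suc n) * Do n)"
    unfolding k2 by (simp add: right_diff_distrib)
  also have "\<dots> = Do n - Do n * (Bo (Suc n) * Do n)" using z1 by simp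
  also have "\<dots> = Do n - Do n * (Bo (Suc n) * Do n) - Bo n * (Do (n - 1) * Do n)"
    using z2 by simp
  also have "\<dots> = Ka n * Do n"
    unfolding k1 by (simp add: left_diff_distrib mult.assoc)
  finally show ?thesis .
qed

lemma BoK_pow: "1 \<le> n \<Longrightarrow> Bo (Suc n) * Ka n ^ k = Ka (Suc n) ^ k * Bo (Suc n)"
proof (induct k)
  case 0 then show ?case by simp
next
  case (Suc k)
  have "Bo (Suc n) * Ka n ^ Suc k = (Bo (Suc n) * Ka n) * Ka n ^ k" by (simp add: mult.assoc)
  also have "\<dots> = Ka (Suc n) * (Bo (Suc n) * Ka n ^ k)" using BoK[OF Suc.prems] by (simp add: mult.assoc)
  also have "\<dots> = Ka (Suc n) ^ Suc k * Bo (Suc n)" using Suc by (simp add: mult.assoc)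
  finally show ?case .
qed

lemma DoK_pow: "1 \<le> n \<Longrightarrow> Do n * Ka (Suc n) ^ k = Ka n ^ k * Do n"
proof (induct k)
  case 0 then show ?case by simp
next
  case (Suc k)
  have "Do n * Ka (Suc n) ^ Suc k = (Do n * Ka (Suc n)) * Ka (Suc n) ^ k" by (simp add: mult.assoc)
  also have "\<dots> = Ka n * (Do n * Ka (Suc n) ^ k)" using DoK[OF Suc.prems] by (simp add: mult.assoc)
  also have "\<dots> = Ka n ^ Suc k * Do n" using Suc by (simp add: mult.assoc)
  finally show ?case .
qed

lemma KE_pow: "1 \<le> i \<Longrightarrow> i \<le> m \<Longrightarrow> m < i + k \<Longrightarrow> Ka m ^ k * E m i = 0"
proof (induct k arbitrary: i)
  case 0 then show ?case by simp
next
  case (Suc k)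
  obtain m' where m: "m = Suc m'" using Suc.prems by (cases m) auto
  have "Ka m ^ Suc k * E m i = Ka m ^ k * (Ka m * E m i)" by (simp only: power_Suc2 mult.assoc)
  also have "\<dots> = 0"
  proof (cases "i = m")
    case True then show ?thesis using KE_top[of m'] m by simp
  next
    case False
    then have "i \<le> m'" using Suc.prems m by simp
    then have "Ka m * E m i = - (E m (Suc i) * Ka m')" using KE_mid[of i m'] Suc.prems m by simp
    moreover have "Ka m ^ k * E m (Suc i) = 0" using Suc.hyps[of "Suc i"] Suc.prems False by simp
    ultimately show ?thesis by (simp add: mult.assoc[symmetric])
  qed
  finally show ?case .
qed

lemma Kbe: "1 \<le> m \<Longrightarrow> Ka m ^ m * be m = 0"
  unfolding be_def sum_distrib_left
  by (rule sum.neutral) (simp add: sg_mult_right KE_pow)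

lemma HK_pow: "j \<le> n \<Longrightarrow> H n j * Ka (Suc n) ^ k = (if k \<le> j then sg k (Ka n ^ k * H n (j - k)) else 0)"
proof (induct k arbitrary: j)
  case 0 then show ?case by simp
next
  case (Suc k)
  have "H n j * Ka (Suc n) ^ Suc k = (H n j * Ka (Suc n)) * Ka (Suc n) ^ k" by (simp only: power_Suc mult.assoc)
  also have "\<dots> = (if Suc k \<le> j then sg (Suc k) (Ka n ^ Suc k * H n (j - Suc k)) else 0)"
  proof (cases "j = 0")
    case True then show ?thesis using HK_zero[of n] by simp
  next
    case False
    note j0 = False
    then have a: "H n j * Ka (Suc n) = - (Ka n * H n (j - 1))" using HK_mid[of j n] Suc.prems by simp
    have b: "H n (j - 1) * Ka (Suc n) ^ k = (if k \<le> j - 1 then sg k (Ka n ^ k * H n (j - 1 - k)) else 0)"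
      using Suc.hyps[of "j - 1"] Suc.prems by simp
    have "(H n j * Ka (Suc n)) * Ka (Suc n) ^ k = - (Ka n * (H n (j - 1) * Ka (Suc n) ^ k))"
      using a by (simp add: mult.assoc)
    also have "\<dots> = (if Suc k \<le> j then sg (Suc k) (Ka n ^ Suc k * H n (j - Suc k)) else 0)"
    proof (cases "Suc k \<le> j")
      case True
      then have "k \<le> j - 1" "j - 1 - k = j - Suc k" by auto
      then show ?thesis using True b by (simp add: sg_mult_right sg_Suc mult.assoc)
    next
      case False
      then have "\<not> k \<le> j - 1" using j0 by auto
      then show ?thesis using False b by simp
    qed
    finally show ?thesis .
  qed
  finally show ?case .
qed

lemma DpK: "Dp n * Ka (Suc n) ^ n = Ka n ^ n * H n 0"
proof -
  have "Dp n * Ka (Suc n) ^ n = (\<Sum>j<Suc n. sg j (H n j * Ka (Suc n) ^ n))"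
    unfolding Dp_def sum_distrib_right by (simp only: sg_mult_left)
  also have "\<dots> = (\<Sum>j<n. sg j (H n j * Ka (Suc n) ^ n)) + sg n (H n n * Ka (Suc n) ^ n)" by simp
  also have "(\<Sum>j<n. sg j (H n j * Ka (Suc n) ^ n)) = 0"
    by (rule sum.neutral) (simp add: HK_pow)
  finally show ?thesis by (simp add: HK_pow)
qed

lemma Dobe0: "Do 0 * be 1 = 0"
proof -
  have a: "eta 0 0 \<circ> eps 1 1 = id" using L3b[of 1 0 0] by simp
  have b: "eta 0 1 \<circ> eps 1 1 = id" using L3b[of 1 1 0] by simp
  show ?thesis using a b
    by (simp add: Do_def be_def sg_def H_def E_def fr_mult eval_nat_numeral algebra_simps)
qed

lemma pow_comm_mult: "a * b = b * (a::'a::ring_1) \<Longrightarrow> a ^ n * b ^ n = (a * b) ^ n"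
proof (induct n)
  case 0 then show ?case by simp
next
  case (Suc n)
  have c: "(a * b) * a = a * (a * b)" using Suc.prems by (metis mult.assoc)
  have p1: "a ^ Suc n = a * a ^ n" by (rule power_Suc)
  have p2: "b ^ Suc n = b ^ n * b" by (rule power_Suc2)
  have "a ^ Suc n * b ^ Suc n = a * (a ^ n * b ^ n) * b" unfolding p1 p2 by (simp only: mult.assoc)
  also have "\<dots> = a * (a * b) ^ n * b" using Suc by simp
  also have "\<dots> = (a * b) ^ n * a * b" using power_commuting_commutes[OF c, of n] by simp
  also have "\<dots> = (a * b) ^ Suc n" by (simp only: power_Suc2 mult.assoc)
  finally show ?case .
qed

theorem R_main:
  "sg n (H n (n+1) * Ka (n+1) ^ n * E (n+1) 0) =
     (1 - Bo n * Do (n - 1)) ^ n * (1 - Do n * Bo (n + 1)) ^ (n + 1)"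
proof -
  let ?X = "Do n * Bo (Suc n)" and ?Y = "Bo n * Do (n - 1)" and ?K = "Ka n" and ?K' = "Ka (Suc n)"
  have S1: "(1 - ?Y) ^ n * (1 - ?X) ^ (n + 1) = ?K ^ n * (1 - ?X)"
  proof (cases "n = 0")
    case True then show ?thesis by simp
  next
    case False
    then have n: "1 \<le> n" by simp
    have XY: "?X * ?Y = 0"
    proof -
      have "?X * ?Y = Do n * (Bo (Suc n) * Bo n) * Do (n - 1)" by (simp add: mult.assoc)
      then show ?thesis using BoBo[OF n] by simp
    qed
    have YX: "?Y * ?X = 0"
    proof -
      have "?Y * ?X = Bo n * (Do (n - 1) * Do (Suc (n - 1))) * Bo (Suc n)" using n by (simp add: mult.assoc)
      then show ?thesis using DoDo[of "n - 1"] by simp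
    qed
    have K: "?K = (1 - ?Y) * (1 - ?X)" using K_eq[OF n] YX by (simp add: algebra_simps)
    have cm: "(1 - ?Y) * (1 - ?X) = (1 - ?X) * (1 - ?Y)" using XY YX by (simp add: algebra_simps)
    have "(1 - ?X) ^ (n + 1) = (1 - ?X) ^ n * (1 - ?X)" by (simp add: power_commutes)
    then have "(1 - ?Y) ^ n * (1 - ?X) ^ (n + 1) = ((1 - ?Y) ^ n * (1 - ?X) ^ n) * (1 - ?X)"
      by (simp add: mult.assoc)
    also have "\<dots> = ?K ^ n * (1 - ?X)" using pow_comm_mult[OF cm] K by simp
    finally show ?thesis .
  qed
  have S2: "?K ^ n * ?X = Do n * ?K' ^ n * Bo (Suc n)"
  proof (cases "n = 0")
    case True then show ?thesis by simp
  next
    case False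
    then show ?thesis using DoK_pow[of n n] by (simp add: mult.assoc[symmetric])
  qed
  have S3: "Do n * ?K' ^ n * be (Suc n) = 0"
  proof (cases "n = 0")
    case True then show ?thesis using Dobe0 by simp
  next
    case False
    then have n: "1 \<le> n" by simp
    have "Do n * ?K' ^ n * be (Suc n) = ?K ^ n * (Do n * be (Suc n))"
      using DoK_pow[OF n, of n] by (simp add: mult.assoc)
    also have "\<dots> = - ((?K ^ n * be n) * Do (n - 1))"
      using Dobe[OF n] by (simp add: eq_neg_iff_add_eq_0[symmetric] mult.assoc)
    also have "\<dots> = 0" using Kbe[OF n] by simp
    finally show ?thesis .
  qed
  have S4: "Do n * ?K' ^ n * E (Suc n) 0 = ?K ^ n + sg (Suc n) (H n (Suc n) * ?K' ^ n * E (Suc n) 0)"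
  proof -
    have "Do n * ?K' ^ n * E (Suc n) 0 = Dp n * ?K' ^ n * E (Suc n) 0 + sg (Suc n) (H n (Suc n) * ?K' ^ n * E (Suc n) 0)"
      by (simp add: Do_split distrib_right sg_mult_left)
    also have "Dp n * ?K' ^ n * E (Suc n) 0 = ?K ^ n" using DpK[of n] H0E0[of n] by (simp add: mult.assoc)
    finally show ?thesis .
  qed
  have "(1 - ?Y) ^ n * (1 - ?X) ^ (n + 1) = ?K ^ n - Do n * ?K' ^ n * Bo (Suc n)"
    using S1 S2 by (simp add: right_diff_distrib)
  also have "\<dots> = ?K ^ n - (Do n * ?K' ^ n * E (Suc n) 0 + Do n * ?K' ^ n * be (Suc n))"
    by (simp add: Bo_split distrib_left)
  also have "\<dots> = sg n (H n (n+1) * Ka (n+1) ^ n * E (n+1) 0)"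
    using S3 S4 by (simp add: sg_Suc)
  finally show ?thesis by simp
qed


context dupl
begin

lemma rep_face: "1 \<le> n \<Longrightarrow> i \<le> n \<Longrightarrow> rep (n - 1) n (E n i) (face MM n i)"
  unfolding E_def face_def by (intro rep_fr lam_eps)

lemma rep_degen: "i \<le> n + 1 \<Longrightarrow> rep (n + 1) n (H n i) (degen MM n i)"
  unfolding H_def degen_def by (intro rep_fr lam_eta)

lemma rep_bop: "1 \<le> n \<Longrightarrow> rep (n - 1) n (Bo n) (bop C MO MM n)"
  unfolding Bo_def bop_def using rep_alt[of "Suc n" "n - 1" n "E n" "face MM n"] rep_face by simp

lemma rep_dop: "rep (n + 1) n (Do n) (dop C MO MM n)"
  unfolding Do_def dop_def using rep_alt[of "Suc (Suc n)" "n + 1" n "H n" "degen MM n"] rep_degen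
  by (simp add: numeral_2_eq_2)

lemma rep_kar:
  assumes n: "1 \<le> n"
  shows "rep n n (Ka n) (karoubi C MM n)"
proof -
  have a: "rep n n (H n (n + 1) * E (n + 1) 0) (Comp C (face MM (n + 1) 0) (degen MM n (n + 1)))"
    using rep_mult[OF rep_face[of "n + 1" 0] rep_degen[of "n + 1" n]] by simp
  have d: "rep n (n - 1) (H (n - 1) n) (degen MM (n - 1) n)"
    using rep_degen[of n "n - 1"] n by simp
  have b: "rep n n (E n 0 * H (n - 1) n) (Comp C (degen MM (n - 1) n) (face MM n 0))"
    using rep_mult[OF d rep_face[OF n, of 0]] by simp
  show ?thesis unfolding Ka_def karoubi_def
    by (intro rep_sgn rep_add rep_neg a b)
qed

lemma rep_dk: "rep n n (sg n (H n (n + 1) * Ka (n + 1) ^ n * E (n + 1) 0)) (dwyer_kan C MO MM n)"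
proof -
  have k: "rep (n + 1) (n + 1) (Ka (n + 1) ^ n) (mpow C (MO (n + 1)) (karoubi C MM (n + 1)) n)"
    by (intro rep_pow rep_kar) simp
  have i: "rep (n + 1) n (H n (n + 1) * Ka (n + 1) ^ n)
      (Comp C (mpow C (MO (n + 1)) (karoubi C MM (n + 1)) n) (degen MM n (n + 1)))"
    by (rule rep_mult[OF k rep_degen]) simp
  have o: "rep n n (H n (n + 1) * Ka (n + 1) ^ n * E (n + 1) 0)
      (Comp C (face MM (n + 1) 0) (Comp C (mpow C (MO (n + 1)) (karoubi C MM (n + 1)) n) (degen MM n (n + 1))))"
    using rep_mult[OF rep_face[of "n + 1" 0] i] by simp
  show ?thesis unfolding dwyer_kan_def by (rule rep_sgn[OF o])
qed

lemma rep_rhs: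
  "rep n n ((1 - Bo n * Do (n - 1)) ^ n * (1 - Do n * Bo (n + 1)) ^ (n + 1))
     (Comp C
       (mpow C (MO n) (one_minus C (MO n) (Comp C (bop C MO MM (n + 1)) (dop C MO MM n))) (n + 1))
       (mpow C (MO n) (one_minus C (MO n) (Comp C (dop C MO MM (n - 1)) (bop C MO MM n))) n))"
proof -
  have x: "rep n n (Do n * Bo (n + 1)) (Comp C (bop C MO MM (n + 1)) (dop C MO MM n))"
    using rep_mult[OF rep_bop[of "n + 1"] rep_dop[of n]] by simp
  have p: "rep n n ((1 - Do n * Bo (n + 1)) ^ (n + 1))
      (mpow C (MO n) (one_minus C (MO n) (Comp C (bop C MO MM (n + 1)) (dop C MO MM n))) (n + 1))"
    by (intro rep_pow rep_one_minus x)
  have q: "rep n n ((1 - Bo n * Do (n - 1)) ^ n)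
      (mpow C (MO n) (one_minus C (MO n) (Comp C (dop C MO MM (n - 1)) (bop C MO MM n))) n)"
  proof (cases "n = 0")
    case True then show ?thesis by (simp add: mpow_def rep_one)
  next
    case False
    then have n: "1 \<le> n" by simp
    have d: "rep n (n - 1) (Do (n - 1)) (dop C MO MM (n - 1))" using rep_dop[of "n - 1"] n by simp
    have y: "rep n n (Bo n * Do (n - 1)) (Comp C (dop C MO MM (n - 1)) (bop C MO MM n))"
      by (rule rep_mult[OF d rep_bop[OF n]])
    show ?thesis by (intro rep_pow rep_one_minus y)
  qed
  show ?thesis by (rule rep_mult[OF p q])
qed

lemma main:
  "dwyer_kan C MO MM n =
     Comp C
       (mpow C (MO n) (one_minus C (MO n) (Comp C (bop C MO MM (n + 1)) (dop C MO MM n))) (n + 1))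
       (mpow C (MO n) (one_minus C (MO n) (Comp C (dop C MO MM (n - 1)) (bop C MO MM n))) n)"
  using rep_dk[of n] rep_rhs[of n] R_main[of n] by (metis rep_unique)

end

theorem mainTheorem15:
  fixes C :: "('o, 'm) preadd_cat"
    and MO :: "nat \<Rightarrow> 'o"
    and MM :: "nat \<Rightarrow> nat \<Rightarrow> (int \<Rightarrow> int) \<Rightarrow> 'm"
    and n :: nat
  assumes "preadditive C"
    and "duplicial C MO MM"
  shows "dwyer_kan C MO MM n =
           Comp C
             (mpow C (MO n) (one_minus C (MO n) (Comp C (bop C MO MM (n + 1)) (dop C MO MM n))) (n + 1))
             (mpow C (MO n) (one_minus C (MO n) (Comp C (dop C MO MM (n - 1)) (bop C MO MM n))) n)"
proof -
  interpret dupl C MO MM using assms by unfold_locales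
  show ?thesis by (rule main)
qed

end
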